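(* Let $h\in(0,1)$, $K\in C^h([0,T])$, and $K_n$ the Bernstein polynomial approximation of $K$ of order $n$. For $u\in L^2_a$ define $$J(u):=\mathbb E\left[-\int_0^Ta_1u^2(s)ds+a_2X^u(T)\right],\qquad J_n(u):=\mathbb E\left[-\int_0^Ta_1u^2(s)ds+a_2X^u_n(T)\right],$$ where $X^u$ and $X^u_n$ solve $X^u(t)=X(0)+\int_0^tK(t-s)(\alpha u(s)-\beta X^u(s))ds+\sigma\int_0^tK(t-s)dW(s)$ and $X^u_n(t)=X(0)+\int_0^tK_n(t-s)(\alpha u(s)-\beta X^u_n(s))ds+\sigma\int_0^tK_n(t-s)dW(s)$, $t\in[0,T]$. Then $$\sup_{n\in\mathbb N}J_n(u)\to-\infty\quad\text{and}\quad J(u)\to-\infty\qquad\text{as }\|u\|_2\to\infty.$$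
   Context: Fix $T>0$ and constants $\alpha,\beta,\sigma>0$, $a_1,a_2>0$, $X(0)\in\mathbb R$. $W$ is a standard one-dimensional Brownian motion; $L^2_a$ is the space of real-valued square-integrable processes on $\Omega\times[0,T]$ adapted to the filtration generated by $W$; $\|\cdot\|_2$ is the $L^2(\Omega\times[0,T])$ norm. $C^h([0,T])$ is the set of $h$-Hölder continuous functions on $[0,T]$. The Bernstein polynomial approximation of order $n$ of $K$ is $K_n(t)=\frac{1}{T^n}\sum_{k=0}^nK\big(\frac{Tk}{n}\big)\binom nk t^k(T-t)^{n-k}$. *)

theory Defs
  imports "HOL-Probability.Probability"
begin

definition std_brownian_motion :: "'a measure \<Rightarrow> (real \<Rightarrow> 'a \<Rightarrow> real) \<Rightarrow> bool" where
  "std_brownian_motion M W \<longleftrightarrow>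
     prob_space M \<and>
     (\<forall>t\<ge>0. W t \<in> borel_measurable M) \<and>
     (\<forall>\<omega>\<in>space M. W 0 \<omega> = 0 \<and> continuous_on {0..} (\<lambda>t. W t \<omega>)) \<and>
     (\<forall>s t. 0 \<le> s \<and> s < t \<longrightarrow>
        distributed M lborel (\<lambda>\<omega>. W t \<omega> - W s \<omega>)
          (\<lambda>x. ennreal (normal_density 0 (sqrt (t - s)) x))) \<and>
     (\<forall>(k::nat) (\<tau>::nat \<Rightarrow> real). 0 \<le> \<tau> 0 \<and> (\<forall>i<k. \<tau> i < \<tau> (Suc i)) \<longrightarrow>
        prob_space.indep_vars M (\<lambda>_. borel) (\<lambda>i \<omega>. W (\<tau> (Suc i)) \<omega> - W (\<tau> i) \<omega>) {..<k})"

definition bm_filtration :: "'a measure \<Rightarrow> (real \<Rightarrow> 'a \<Rightarrow> real) \<Rightarrow> real \<Rightarrow> 'a measure" where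
  "bm_filtration M W t = sigma (space M)
     {(W s) -` B \<inter> space M | s B. s \<in> {0..t} \<and> B \<in> sets borel}"

definition OmegaT :: "'a measure \<Rightarrow> real \<Rightarrow> ('a \<times> real) measure" where
  "OmegaT M T = M \<Otimes>\<^sub>M restrict_space lborel {0..T}"

definition L2a :: "'a measure \<Rightarrow> (real \<Rightarrow> 'a \<Rightarrow> real) \<Rightarrow> real \<Rightarrow> (real \<Rightarrow> 'a \<Rightarrow> real) set" where
  "L2a M W T = {u. (\<lambda>(\<omega>,s). u s \<omega>) \<in> borel_measurable (OmegaT M T) \<and>
                   integrable (OmegaT M T) (\<lambda>(\<omega>,s). (u s \<omega>)^2) \<and>
                   (\<forall>t\<in>{0..T}. u t \<in> borel_measurable (bm_filtration M W t))}"

definition L2norm :: "'a measure \<Rightarrow> real \<Rightarrow> (real \<Rightarrow> 'a \<Rightarrow> real) \<Rightarrow> real" where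
  "L2norm M T u = sqrt (integral\<^sup>L (OmegaT M T) (\<lambda>(\<omega>,s). (u s \<omega>)^2))"

text \<open>Y is (a version of) the Wiener integral \<integral>_0^t f(s) dW(s) of a continuous
  deterministic integrand f: the L^2(M)-limit of the left-point Riemann--Ito sums
  over uniform partitions of [0,t].\<close>
definition wiener_sum :: "(real \<Rightarrow> 'a \<Rightarrow> real) \<Rightarrow> real \<Rightarrow> (real \<Rightarrow> real) \<Rightarrow> nat \<Rightarrow> 'a \<Rightarrow> real" where
  "wiener_sum W t f m \<omega> = (\<Sum>i<m. f (t * real i / real m) *
        (W (t * real (Suc i) / real m) \<omega> - W (t * real i / real m) \<omega>))"

definition is_wiener_integral ::
  "'a measure \<Rightarrow> (real \<Rightarrow> 'a \<Rightarrow> real) \<Rightarrow> real \<Rightarrow> (real \<Rightarrow> real) \<Rightarrow> ('a \<Rightarrow> real) \<Rightarrow> bool" where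
  "is_wiener_integral M W t f Y \<longleftrightarrow>
     Y \<in> borel_measurable M \<and>
     (\<forall>m. integrable M (\<lambda>\<omega>. (wiener_sum W t f m \<omega> - Y \<omega>)^2)) \<and>
     (\<lambda>m. integral\<^sup>L M (\<lambda>\<omega>. (wiener_sum W t f m \<omega> - Y \<omega>)^2)) \<longlonglongrightarrow> 0"

definition holder_on :: "real \<Rightarrow> real \<Rightarrow> (real \<Rightarrow> real) \<Rightarrow> bool" where
  "holder_on T h K \<longleftrightarrow> (\<exists>C. \<forall>s\<in>{0..T}. \<forall>t\<in>{0..T}. \<bar>K s - K t\<bar> \<le> C * \<bar>s - t\<bar> powr h)"

definition bernstein :: "real \<Rightarrow> (real \<Rightarrow> real) \<Rightarrow> nat \<Rightarrow> real \<Rightarrow> real" where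
  "bernstein T K n t = (1 / T ^ n) *
     (\<Sum>k=0..n. K (T * real k / real n) * real (n choose k) * t ^ k * (T - t) ^ (n - k))"

text \<open>X solves the controlled Volterra equation with kernel K, control u and noise term
  Z(t) = \<integral>_0^t K(t-s) dW(s):
  X(t) = x0 + \<integral>_0^t K(t-s)(\<alpha> u(s) - \<beta> X(s)) ds + \<sigma> Z(t), t \<in> [0,T], a.s.\<close>
definition volterra_solution ::
  "'a measure \<Rightarrow> real \<Rightarrow> (real \<Rightarrow> real) \<Rightarrow> real \<Rightarrow> real \<Rightarrow> real \<Rightarrow> real \<Rightarrow>
   (real \<Rightarrow> 'a \<Rightarrow> real) \<Rightarrow> (real \<Rightarrow> 'a \<Rightarrow> real) \<Rightarrow> (real \<Rightarrow> 'a \<Rightarrow> real) \<Rightarrow> bool" where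
  "volterra_solution M T K \<alpha> \<beta> \<sigma> x0 Z u X \<longleftrightarrow>
     (\<forall>t\<in>{0..T}. X t \<in> borel_measurable M) \<and>
     (\<lambda>(\<omega>,s). X s \<omega>) \<in> borel_measurable (OmegaT M T) \<and>
     (\<forall>t\<in>{0..T}. AE \<omega> in M.
        set_integrable lborel {0..t} (\<lambda>s. K (t - s) * (\<alpha> * u s \<omega> - \<beta> * X s \<omega>)) \<and>
        X t \<omega> = x0 + set_lebesgue_integral lborel {0..t} (\<lambda>s. K (t - s) * (\<alpha> * u s \<omega> - \<beta> * X s \<omega>))
                  + \<sigma> * Z t \<omega>)"

definition perf :: "'a measure \<Rightarrow> real \<Rightarrow> real \<Rightarrow> real \<Rightarrow> (real \<Rightarrow> 'a \<Rightarrow> real) \<Rightarrow> (real \<Rightarrow> 'a \<Rightarrow> real) \<Rightarrow> real" where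
  "perf M T a1 a2 u X = integral\<^sup>L M (\<lambda>\<omega>.
      - set_lebesgue_integral lborel {0..T} (\<lambda>s. a1 * (u s \<omega>)^2) + a2 * X T \<omega>)"

end

theory Submission
  imports Defs
begin



lemma holder_cont:
  assumes "0 < h" "holder_on T h K"
  shows "continuous_on {0..T} K"
proof -
  obtain C where C: "\<forall>s\<in>{0..T}. \<forall>t\<in>{0..T}. \<bar>K s - K t\<bar> \<le> C * \<bar>s - t\<bar> powr h"
    using assms(2) unfolding holder_on_def by blast
  show ?thesis
    unfolding continuous_on_iff
  proof (intro ballI allI impI)
    fix x e :: real assume x: "x \<in> {0..T}" and e: "0 < e"
    define d where "d = (e / (\<bar>C\<bar> + 1)) powr (1/h)"
    have d: "0 < d" using e by (simp add: d_def)
    show "\<exists>d>0. \<forall>x'\<in>{0..T}. dist x' x < d \<longrightarrow> dist (K x') (K x) < e"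
    proof (intro exI[of _ d] conjI ballI impI d)
      fix y assume y: "y \<in> {0..T}" and dy: "dist y x < d"
      have "\<bar>K y - K x\<bar> \<le> C * \<bar>y - x\<bar> powr h" using C x y by blast
      also have "\<dots> \<le> \<bar>C\<bar> * \<bar>y - x\<bar> powr h" by (simp add: mult_right_mono)
      also have "\<dots> \<le> \<bar>C\<bar> * d powr h"
        using dy assms(1) by (intro mult_left_mono powr_mono2) (auto simp: dist_real_def)
      also have "d powr h = e / (\<bar>C\<bar> + 1)"
        using e assms(1) by (simp add: d_def powr_powr)
      also have "\<bar>C\<bar> * (e / (\<bar>C\<bar> + 1)) < e"
        using e by (simp add: field_simps)
      finally show "dist (K y) (K x) < e" by (simp add: dist_real_def)
    qed
  qed
qed

lemma bern_bound:
  assumes T: "T > 0" and n: "n \<ge> 1" and L: "\<forall>r\<in>{0..T}. \<bar>K r\<bar> \<le> L" and r: "r \<in> {0..T}"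
  shows "\<bar>bernstein T K n r\<bar> \<le> L"
proof -
  have "\<bar>\<Sum>k=0..n. K (T * real k / real n) * real (n choose k) * r ^ k * (T - r) ^ (n - k)\<bar>
      \<le> (\<Sum>k=0..n. L * (real (n choose k) * r ^ k * (T - r) ^ (n - k)))"
  proof (rule order_trans[OF sum_abs], rule sum_mono)
    fix k assume k: "k \<in> {0..n}"
    have "T * real k / real n \<in> {0..T}" using k n T
      by (auto simp: field_simps intro!: mult_left_le)
    then have "\<bar>K (T * real k / real n)\<bar> \<le> L" using L by blast
    moreover have "0 \<le> real (n choose k) * r ^ k * (T - r) ^ (n - k)" using r by auto
    ultimately show "\<bar>K (T * real k / real n) * real (n choose k) * r ^ k * (T - r) ^ (n - k)\<bar>
        \<le> L * (real (n choose k) * r ^ k * (T - r) ^ (n - k))"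
    proof -
      have "\<bar>K (T * real k / real n) * real (n choose k) * r ^ k * (T - r) ^ (n - k)\<bar>
           = \<bar>K (T * real k / real n)\<bar> * (real (n choose k) * r ^ k * (T - r) ^ (n - k))"
        using r by (simp add: abs_mult mult.assoc)
      also have "\<dots> \<le> L * (real (n choose k) * r ^ k * (T - r) ^ (n - k))"
        by (rule mult_right_mono) fact+
      finally show ?thesis .
    qed
  qed
  also have "\<dots> = L * (r + (T - r)) ^ n"
    unfolding binomial_ring sum_distrib_left by (simp add: mult_ac atLeast0AtMost)
  also have "\<dots> = L * T ^ n" by simp
  finally show ?thesis using T
    by (simp add: bernstein_def abs_mult field_simps)
qed

lemma bern_cont: "continuous_on A (bernstein T K n)"
  unfolding bernstein_def by (intro continuous_intros)



lemma wiener_sum_sq: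
  assumes BM: "std_brownian_motion M W" and t: "0 \<le> t" and f: "\<forall>s\<in>{0..t}. \<bar>f s\<bar> \<le> L"
  shows "integrable M (\<lambda>\<omega>. (wiener_sum W t f m \<omega>)^2) \<and> (\<integral>\<omega>. (wiener_sum W t f m \<omega>)^2 \<partial>M) \<le> L^2 * t"
proof -
  interpret prob_space M using BM unfolding std_brownian_motion_def by blast
  have L0: "0 \<le> L" using f t by force
  show ?thesis
  proof (cases "m = 0 \<or> t = 0")
    case True
    then have "\<And>\<omega>. wiener_sum W t f m \<omega> = 0" by (auto simp: wiener_sum_def)
    then show ?thesis using L0 t by simp
  next
    case False
    then have m: "m > 0" and tp: "t > 0" using t by auto
    define \<tau> where "\<tau> i = t * real i / real m" for i
    define D where "D i \<omega> = W (\<tau> (Suc i)) \<omega> - W (\<tau> i) \<omega>" for i \<omega>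
    define c where "c i = f (\<tau> i)" for i
    have S: "wiener_sum W t f m \<omega> = (\<Sum>i<m. c i * D i \<omega>)" for \<omega>
      by (simp add: wiener_sum_def c_def D_def \<tau>_def)
    have dist: "distributed M lborel (D i) (\<lambda>x. ennreal (normal_density 0 (sqrt (t / m)) x))" for i
    proof -
      have "0 \<le> \<tau> i" "\<tau> i < \<tau> (Suc i)" using m tp by (auto simp: \<tau>_def field_simps)
      moreover have "\<tau> (Suc i) - \<tau> i = t / m" using m by (simp add: \<tau>_def field_simps)
      moreover have "\<forall>s t. 0 \<le> s \<and> s < t \<longrightarrow>
        distributed M lborel (\<lambda>\<omega>. W t \<omega> - W s \<omega>) (\<lambda>x. ennreal (normal_density 0 (sqrt (t - s)) x))"
        using BM unfolding std_brownian_motion_def by blast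
      ultimately show ?thesis unfolding D_def by force
    qed
    have sp: "0 < sqrt (t / m)" using m tp by simp
    have intD: "integrable M (D i)" for i
      by (subst distributed_integrable[OF dist[of i], of "\<lambda>x. x", symmetric])
        (auto intro: integrable_normal_moment_nz_1[OF sp])
    have intD2: "integrable M (\<lambda>\<omega>. (D i \<omega>)^2)" for i
      using integrable_normal_moment[OF sp, of 0 2]
      by (subst distributed_integrable[OF dist[of i], of "\<lambda>x. x^2", symmetric]) auto
    have ED: "expectation (D i) = 0" for i
      using normal_distributed_expectation[OF sp dist[of i]] .
    have ED2: "expectation (\<lambda>\<omega>. (D i \<omega>)^2) = t / m" for i
      using normal_distributed_variance[OF sp dist[of i]] ED[of i] m tp by simp
    have ind: "indep_vars (\<lambda>_. borel) D {..<m}"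
    proof -
      have "0 \<le> \<tau> 0" "\<forall>i<m. \<tau> i < \<tau> (Suc i)" using m tp by (auto simp: \<tau>_def field_simps)
      then show ?thesis using BM unfolding std_brownian_motion_def D_def by blast
    qed
    have cross: "integrable M (\<lambda>\<omega>. D i \<omega> * D j \<omega>) \<and> expectation (\<lambda>\<omega>. D i \<omega> * D j \<omega>) = (if i = j then t / m else 0)"
      if ij: "i < m" "j < m" for i j
    proof (cases "i = j")
      case True then show ?thesis using intD2[of i] ED2[of i] by (simp add: power2_eq_square)
    next
      case False
      have ind2: "indep_vars (\<lambda>_. borel) D {i, j}" using indep_vars_subset[OF ind] ij by auto
      have "integrable M (\<lambda>\<omega>. \<Prod>k\<in>{i,j}. D k \<omega>)"
        by (rule indep_vars_integrable[OF _ ind2]) (auto intro: intD)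
      moreover have "expectation (\<lambda>\<omega>. \<Prod>k\<in>{i,j}. D k \<omega>) = (\<Prod>k\<in>{i,j}. expectation (D k))"
        by (rule indep_vars_lebesgue_integral[OF _ ind2]) (auto intro: intD)
      ultimately show ?thesis using False ED by simp
    qed
    have crossI: "integrable M (\<lambda>\<omega>. D i \<omega> * D j \<omega>)" if "i < m" "j < m" for i j
      using cross[OF that] by blast
    have crossE: "expectation (\<lambda>\<omega>. D i \<omega> * D j \<omega>) = (if i = j then t / m else 0)" if "i < m" "j < m" for i j
      using cross[OF that] by blast
    have sq: "(wiener_sum W t f m \<omega>)^2 = (\<Sum>i<m. \<Sum>j<m. c i * c j * (D i \<omega> * D j \<omega>))" for \<omega>
      unfolding S power2_eq_square sum_product by (simp add: mult_ac)
    have int: "integrable M (\<lambda>\<omega>. (wiener_sum W t f m \<omega>)^2)"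
      unfolding sq by (intro Bochner_Integration.integrable_sum integrable_mult_right crossI) auto
    have "(\<integral>\<omega>. (wiener_sum W t f m \<omega>)^2 \<partial>M) = (\<Sum>i<m. \<integral>\<omega>. (\<Sum>j<m. c i * c j * (D i \<omega> * D j \<omega>)) \<partial>M)"
      unfolding sq by (rule Bochner_Integration.integral_sum)
        (auto intro!: Bochner_Integration.integrable_sum integrable_mult_right crossI)
    also have "\<dots> = (\<Sum>i<m. \<Sum>j<m. \<integral>\<omega>. c i * c j * (D i \<omega> * D j \<omega>) \<partial>M)"
      by (intro sum.cong refl Bochner_Integration.integral_sum) (auto intro!: integrable_mult_right crossI)
    also have "\<dots> = (\<Sum>i<m. \<Sum>j<m. c i * c j * expectation (\<lambda>\<omega>. D i \<omega> * D j \<omega>))"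
      by simp
    also have "\<dots> = (\<Sum>i<m. c i * c i * (t / m))"
    proof (rule sum.cong[OF refl])
      fix i assume i: "i \<in> {..<m}"
      have "(\<Sum>j<m. c i * c j * expectation (\<lambda>\<omega>. D i \<omega> * D j \<omega>)) = (\<Sum>j<m. if j = i then c i * c i * (t / m) else 0)"
        using cross i by (intro sum.cong) auto
      also have "\<dots> = c i * c i * (t / m)" using i by (simp add: sum.delta)
      finally show "(\<Sum>j<m. c i * c j * expectation (\<lambda>\<omega>. D i \<omega> * D j \<omega>)) = c i * c i * (t / m)" .
    qed
    also have "\<dots> \<le> (\<Sum>i<m. L^2 * (t / m))"
    proof (rule sum_mono)
      fix i assume "i \<in> {..<m}"
      then have "\<tau> i \<in> {0..t}" using tp m by (auto simp: \<tau>_def field_simps)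
      then have "\<bar>c i\<bar> \<le> L" using f by (simp add: c_def)
      then have "\<bar>c i\<bar> * \<bar>c i\<bar> \<le> L * L" using L0 by (intro mult_mono) auto
      then have "c i * c i \<le> L^2" by (simp add: power2_eq_square)
      then show "c i * c i * (t / m) \<le> L^2 * (t / m)" using tp m by (intro mult_right_mono) auto
    qed
    also have "\<dots> = L^2 * t" using m by simp
    finally show ?thesis using int by simp
  qed
qed


lemma wiener_L1:
  assumes BM: "std_brownian_motion M W" and t: "0 \<le> t" and f: "\<forall>s\<in>{0..t}. \<bar>f s\<bar> \<le> L"
    and Y: "is_wiener_integral M W t f Y"
  shows "Y \<in> borel_measurable M \<and> (\<integral>\<^sup>+\<omega>. ennreal \<bar>Y \<omega>\<bar> \<partial>M) \<le> ennreal (2 + L^2 * t)"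
proof -
  interpret prob_space M using BM unfolding std_brownian_motion_def by blast
  have Ym: "Y \<in> borel_measurable M" and intd: "\<And>m. integrable M (\<lambda>\<omega>. (wiener_sum W t f m \<omega> - Y \<omega>)^2)"
    and lim: "(\<lambda>m. integral\<^sup>L M (\<lambda>\<omega>. (wiener_sum W t f m \<omega> - Y \<omega>)^2)) \<longlonglongrightarrow> 0"
    using Y unfolding is_wiener_integral_def by auto
  from order_tendstoD(2)[OF lim, of 1] obtain m where
    m: "integral\<^sup>L M (\<lambda>\<omega>. (wiener_sum W t f m \<omega> - Y \<omega>)^2) < 1"
    by (auto simp: eventually_sequentially)
  define S where "S = wiener_sum W t f m"
  have S2: "integrable M (\<lambda>\<omega>. (S \<omega>)^2)" "(\<integral>\<omega>. (S \<omega>)^2 \<partial>M) \<le> L^2 * t"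
    using wiener_sum_sq[OF BM t f, of m] by (auto simp: S_def)
  have D2: "integrable M (\<lambda>\<omega>. (S \<omega> - Y \<omega>)^2)" "(\<integral>\<omega>. (S \<omega> - Y \<omega>)^2 \<partial>M) < 1"
    using intd[of m] m by (auto simp: S_def)
  have pw: "\<bar>Y \<omega>\<bar> \<le> 1 + (S \<omega> - Y \<omega>)^2 / 2 + (S \<omega>)^2 / 2" for \<omega>
  proof -
    have a: "\<bar>a\<bar> \<le> 1/2 + a^2/2" for a :: real
      using sum_squares_ge_zero[of "\<bar>a\<bar> - 1" 0] by (simp add: power2_eq_square algebra_simps)
    have "\<bar>Y \<omega>\<bar> \<le> \<bar>S \<omega> - Y \<omega>\<bar> + \<bar>S \<omega>\<bar>" by linarith
    then show ?thesis using a[of "S \<omega> - Y \<omega>"] a[of "S \<omega>"] by linarith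
  qed
  have intR: "integrable M (\<lambda>\<omega>. 1 + (S \<omega> - Y \<omega>)^2 / 2 + (S \<omega>)^2 / 2)"
    using S2(1) D2(1) by auto
  have "(\<integral>\<^sup>+\<omega>. ennreal \<bar>Y \<omega>\<bar> \<partial>M) \<le> (\<integral>\<^sup>+\<omega>. ennreal (1 + (S \<omega> - Y \<omega>)^2 / 2 + (S \<omega>)^2 / 2) \<partial>M)"
    by (intro nn_integral_mono ennreal_leI pw)
  also have "\<dots> = ennreal (\<integral>\<omega>. 1 + (S \<omega> - Y \<omega>)^2 / 2 + (S \<omega>)^2 / 2 \<partial>M)"
    by (intro nn_integral_eq_integral intR) auto
  also have "(\<integral>\<omega>. 1 + (S \<omega> - Y \<omega>)^2 / 2 + (S \<omega>)^2 / 2 \<partial>M)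
      = 1 + (\<integral>\<omega>. (S \<omega> - Y \<omega>)^2 \<partial>M) / 2 + (\<integral>\<omega>. (S \<omega>)^2 \<partial>M) / 2"
    using S2(1) D2(1) by (simp add: prob_space)
  also have "\<dots> \<le> 2 + L^2 * t"
  proof -
    have "0 \<le> L^2 * t" using t by simp
    then show ?thesis using S2(2) D2(2) by linarith
  qed
  finally show ?thesis using Ym by (simp add: ennreal_leI)
qed



lemma nn_integral_exp_interval:
  assumes t: "0 \<le> t" and l: "0 < l" and c: "0 \<le> c"
  shows "(\<integral>\<^sup>+s. ennreal (c * exp (l * s) * indicator {0..t} s) \<partial>lborel) = ennreal (c * (exp (l * t) - 1) / l)"
proof -
  let ?F = "\<lambda>s. c * exp (l * s) / l"
  let ?f = "\<lambda>s. c * exp (l * s)"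
  have "(?f has_integral ?F t - ?F 0) {0..t}"
  proof (rule fundamental_theorem_of_calculus[OF t])
    fix x assume "x \<in> {0..t}"
    have "(?F has_real_derivative ?f x) (at x within {0..t})"
      using l by (auto intro!: derivative_eq_intros)
    then show "(?F has_vector_derivative ?f x) (at x within {0..t})"
      by (simp add: has_real_derivative_iff_has_vector_derivative)
  qed
  then have "((\<lambda>s. ?f s * indicator {0..t} s) has_integral ?F t - ?F 0) {0..t}"
    by (subst has_integral_cong[where g="?f"]) auto
  then have "((\<lambda>s. ?f s * indicator {0..t} s) has_integral ?F t - ?F 0) UNIV"
    by (intro has_integral_on_superset[where T=UNIV and S="{0..t}"]) auto
  then have "integral\<^sup>N lborel (\<lambda>s. ?f s * indicator {0..t} s) = ?F t - ?F 0"
    by (rule nn_integral_has_integral_lborel[rotated 2]) (use c in auto)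
  moreover have "?F t - ?F 0 = c * (exp (l * t) - 1) / l" by (simp add: diff_divide_distrib right_diff_distrib)
  ultimately show ?thesis by simp
qed

lemma gronwall_enn:
  fixes f :: "real \<Rightarrow> ennreal"
  assumes s0: "0 \<le> s0" and A: "0 \<le> A" and b: "0 \<le> b"
    and bound: "\<forall>t\<in>{0..s0}. f t \<le> ennreal B"
    and rec: "\<forall>t\<in>{0..s0}. f t \<le> ennreal A + ennreal b * (\<integral>\<^sup>+s. f s * indicator {0..t} s \<partial>lborel)"
  shows "\<forall>t\<in>{0..s0}. f t \<le> ennreal (2 * A * exp ((2*b+1) * s0))"
proof -
  define l where "l = 2*b+1"
  have l: "0 < l" using b by (simp add: l_def)
  define g where "g t = enn2real (f t)" for t
  have fg: "f t = ennreal (g t)" if "t \<in> {0..s0}" for t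
  proof -
    have "f t < top" using le_less_trans[OF bound[rule_format, OF that] ennreal_less_top] .
    then show ?thesis by (simp add: g_def)
  qed
  have g0: "0 \<le> g t" for t by (simp add: g_def)
  have B0: "g t \<le> max B 0" if "t \<in> {0..s0}" for t
  proof -
    have "ennreal (g t) \<le> ennreal B" using bound[rule_format, OF that] fg[OF that] by simp
    then show ?thesis using g0[of t] by (cases "0 \<le> B") (auto simp: ennreal_le_iff ennreal_neg)
  qed
  define h where "h t = exp (- l * t) * g t" for t
  define S where "S = Sup (h ` {0..s0})"
  have hB: "h t \<le> max B 0" if "t \<in> {0..s0}" for t
  proof -
    have "exp (- l * t) \<le> 1" using that l by auto
    then have "h t \<le> 1 * g t" unfolding h_def using g0[of t] by (intro mult_right_mono) auto
    then show ?thesis using B0[OF that] by simp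
  qed
  have bdd: "bdd_above (h ` {0..s0})" by (rule bdd_aboveI[of _ "max B 0"]) (use hB in auto)
  have hS: "h t \<le> S" if "t \<in> {0..s0}" for t
    unfolding S_def using bdd that by (auto intro: cSup_upper)
  have S0: "0 \<le> S"
  proof -
    have "0 \<le> h 0" by (simp add: h_def g0)
    also have "h 0 \<le> S" using hS[of 0] s0 by simp
    finally show ?thesis .
  qed
  have gS: "g s \<le> S * exp (l * s)" if "s \<in> {0..s0}" for s
  proof -
    have "g s = h s * exp (l * s)" by (simp add: h_def exp_minus field_simps)
    also have "\<dots> \<le> S * exp (l * s)" using hS[OF that] by (intro mult_right_mono) auto
    finally show ?thesis .
  qed
  have key: "h t \<le> A + S / 2" if t: "t \<in> {0..s0}" for t
  proof -
    have "(\<integral>\<^sup>+s. f s * indicator {0..t} s \<partial>lborel) \<le> (\<integral>\<^sup>+s. ennreal (S * exp (l * s) * indicator {0..t} s) \<partial>lborel)"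
    proof (intro nn_integral_mono)
      fix s show "f s * indicator {0..t} s \<le> ennreal (S * exp (l * s) * indicator {0..t} s)"
      proof (cases "s \<in> {0..t}")
        case True
        then have s: "s \<in> {0..s0}" using t by auto
        show ?thesis using True fg[OF s] gS[OF s] by (simp add: ennreal_leI)
      qed simp
    qed
    also have "\<dots> = ennreal (S * (exp (l * t) - 1) / l)"
      using t l S0 by (intro nn_integral_exp_interval) auto
    finally have Ib: "(\<integral>\<^sup>+s. f s * indicator {0..t} s \<partial>lborel) \<le> ennreal (S * (exp (l * t) - 1) / l)" .
    have "f t \<le> ennreal A + ennreal b * ennreal (S * (exp (l * t) - 1) / l)"
      using order_trans[OF rec[rule_format, OF t] add_left_mono[OF mult_left_mono[OF Ib]]] by simp
    also have "\<dots> = ennreal (A + b * (S * (exp (l * t) - 1) / l))"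
    proof -
      have E0: "0 \<le> S * (exp (l * t) - 1) / l" using S0 l t by auto
      have "ennreal b * ennreal (S * (exp (l * t) - 1) / l) = ennreal (b * (S * (exp (l * t) - 1) / l))"
        by (rule ennreal_mult[OF b E0, symmetric])
      then show ?thesis using ennreal_plus[OF A mult_nonneg_nonneg[OF b E0], symmetric] by simp
    qed
    finally have "ennreal (g t) \<le> ennreal (A + b * (S * (exp (l * t) - 1) / l))"
      using fg[OF t] by simp
    then have gt: "g t \<le> A + b * (S * (exp (l * t) - 1) / l)"
      using A b S0 l t by (subst (asm) ennreal_le_iff) auto
    have e1: "exp (- l * t) \<le> 1" using t l by auto
    have "h t \<le> exp (- l * t) * (A + b * (S * (exp (l * t) - 1) / l))"
      unfolding h_def using gt by (intro mult_left_mono) auto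
    also have "\<dots> = exp (- l * t) * A + (b / l) * S * (1 - exp (- l * t))"
      using l by (simp add: field_simps exp_minus)
    also have "\<dots> \<le> A + S / 2"
    proof -
      have "exp (- l * t) * A \<le> A" using e1 A by (simp add: mult_left_le_one_le)
      moreover have "(b / l) * S * (1 - exp (- l * t)) \<le> S / 2"
      proof -
        have "b / l \<le> 1/2" using b l by (simp add: l_def field_simps)
        moreover have "0 \<le> 1 - exp (- l * t)" "1 - exp (- l * t) \<le> 1" using e1 by auto
        ultimately have "(b / l) * (1 - exp (- l * t)) \<le> 1/2"
        proof -
          have "(b / l) * (1 - exp (- l * t)) \<le> b / l"
            using b l \<open>0 \<le> 1 - exp (- l * t)\<close> \<open>1 - exp (- l * t) \<le> 1\<close>
            by (intro mult_right_le_one_le) auto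
          then show ?thesis using \<open>b / l \<le> 1/2\<close> by linarith
        qed
        then have "(b / l) * (1 - exp (- l * t)) * S \<le> 1/2 * S" using S0 by (rule mult_right_mono)
        then show ?thesis by (simp add: mult_ac)
      qed
      ultimately show ?thesis by linarith
    qed
    finally show ?thesis .
  qed
  have "Sup (h ` {0..s0}) \<le> A + S / 2" by (rule cSup_least) (use key s0 in auto)
  then have "S \<le> A + S / 2" by (simp add: S_def)
  then have S2: "S \<le> 2 * A" by simp
  show ?thesis
  proof
    fix t assume t: "t \<in> {0..s0}"
    have "g t \<le> S * exp (l * t)" by (rule gS[OF t])
    also have "\<dots> \<le> 2 * A * exp (l * s0)"
      using S2 S0 t l by (intro mult_mono) auto
    finally show "f t \<le> ennreal (2 * A * exp ((2*b+1) * s0))"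
      using fg[OF t] by (simp add: l_def ennreal_leI)
  qed
qed


lemma locint:
  fixes G x :: "real \<Rightarrow> real"
  assumes T: "0 < T" and Gc: "continuous_on {0..T} G" and r: "0 \<le> r" "r \<le> T" and Gr: "G r \<noteq> 0"
    and xm: "x \<in> borel_measurable lborel"
    and hyp: "\<And>t. t \<in> {0..T} \<Longrightarrow> t \<in> \<rat> \<or> t = T \<Longrightarrow> set_integrable lborel {0..t} (\<lambda>s. G (t - s) * x s)"
    and s0: "0 \<le> s0" "s0 \<le> T - r"
  shows "(\<integral>\<^sup>+s. ennreal (indicator {0..s0} s * \<bar>x s\<bar>) \<partial>lborel) < \<infinity>"
proof -
  define g where "g = \<bar>G r\<bar> / 2"
  have g: "0 < g" using Gr by (simp add: g_def)
  obtain \<delta> where \<delta>: "0 < \<delta>" and \<delta>G: "\<And>r'. r' \<in> {0..T} \<Longrightarrow> dist r' r < \<delta> \<Longrightarrow> dist (G r') (G r) < g"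
    using Gc r g unfolding continuous_on_iff by (metis atLeastAtMost_iff)
  have Gbig: "g < \<bar>G r'\<bar>" if "r' \<in> {0..T}" "\<bar>r' - r\<bar> < \<delta>" for r'
  proof -
    have "\<bar>G r' - G r\<bar> < g" using \<delta>G[OF that(1)] that(2) by (auto simp: dist_real_def)
    then show ?thesis unfolding g_def by linarith
  qed
  have loc: "\<forall>s\<in>cbox 0 s0. \<exists>d>0. \<forall>u v. s \<in> cbox u v \<and> cbox u v \<subseteq> ball s d \<and> cbox u v \<subseteq> cbox 0 s0 \<longrightarrow>
      (\<lambda>s. \<bar>x s\<bar>) integrable_on cbox u v"
  proof
    fix s assume s: "s \<in> cbox 0 s0"
    then have s': "0 \<le> s" "s \<le> s0" by auto
    obtain t d where t: "t \<in> {0..T}" "t \<in> \<rat> \<or> t = T" "s + r \<le> t" "t < s + r + \<delta>/2"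
      and d: "0 < d" "d \<le> \<delta>/2" and dt: "s + d \<le> t \<or> t = T"
    proof (cases "s + r < T")
      case True
      obtain q where q: "q \<in> \<rat>" "s + r < q" "q < min T (s + r + \<delta>/2)"
        using Rats_dense_in_real[of "s + r" "min T (s + r + \<delta>/2)"] True \<delta> by auto
      show ?thesis
        by (rule that[of q "min (\<delta>/2) (q - s - r)"]) (use q s' r \<delta> in auto)
    next
      case False
      then have "s + r = T" using s' s0 by linarith
      then show ?thesis by (intro that[of T "\<delta>/2"]) (use \<delta> T in auto)
    qed
    show "\<exists>d>0. \<forall>u v. s \<in> cbox u v \<and> cbox u v \<subseteq> ball s d \<and> cbox u v \<subseteq> cbox 0 s0 \<longrightarrow>
      (\<lambda>s. \<bar>x s\<bar>) integrable_on cbox u v"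
    proof (intro exI[of _ d] conjI allI impI d)
      fix u v assume uv: "s \<in> cbox u v \<and> cbox u v \<subseteq> ball s d \<and> cbox u v \<subseteq> cbox 0 s0"
      have inside: "s' \<in> {0..t} \<and> g < \<bar>G (t - s')\<bar>" if "s' \<in> {u..v}" for s'
      proof -
        have s'1: "dist s s' < d" "0 \<le> s'" "s' \<le> s0" using uv that by (auto simp: subset_iff)
        have "s' \<le> t"
        proof (cases "t = T")
          case True then show ?thesis using s'1 s0 r by linarith
        next
          case False then have "s + d \<le> t" using dt by simp
          then show ?thesis using s'1 by (auto simp: dist_real_def)
        qed
        moreover have "t - s' \<in> {0..T}" using \<open>s' \<le> t\<close> t s'1 by auto
        moreover have "\<bar>(t - s') - r\<bar> < \<delta>" using s'1 t d by (auto simp: dist_real_def)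
        ultimately show ?thesis using Gbig s'1 by auto
      qed
      have int1: "integrable lborel (\<lambda>s. indicator {0..t} s *\<^sub>R (G (t - s) * x s))"
        using hyp[OF t(1,2)] unfolding set_integrable_def .
      have "integrable lborel (\<lambda>s. indicator {u..v} s *\<^sub>R \<bar>x s\<bar>)"
      proof (rule Bochner_Integration.integrable_bound[OF integrable_mult_right[OF int1, of "1/g"]])
        show "(\<lambda>s. indicator {u..v} s *\<^sub>R \<bar>x s\<bar>) \<in> borel_measurable lborel" using xm by measurable
        show "AE s in lborel. norm (indicator {u..v} s *\<^sub>R \<bar>x s\<bar>) \<le> norm (1 / g * (indicator {0..t} s *\<^sub>R (G (t - s) * x s)))"
        proof (rule AE_I2)
          fix s' show "norm (indicator {u..v} s' *\<^sub>R \<bar>x s'\<bar>) \<le> norm (1 / g * (indicator {0..t} s' *\<^sub>R (G (t - s') * x s')))"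
          proof (cases "s' \<in> {u..v}")
            case True
            note i = inside[OF True]
            have "\<bar>x s'\<bar> = (1/g) * (g * \<bar>x s'\<bar>)" using g by simp
            also have "\<dots> \<le> (1/g) * (\<bar>G (t - s')\<bar> * \<bar>x s'\<bar>)"
              using i g by (intro mult_left_mono mult_right_mono) auto
            finally show ?thesis using True i g by (simp add: abs_mult)
          qed simp
        qed
      qed
      then have "set_integrable lborel {u..v} (\<lambda>s. \<bar>x s\<bar>)" unfolding set_integrable_def .
      then show "(\<lambda>s. \<bar>x s\<bar>) integrable_on cbox u v"
        using set_borel_integral_eq_integral(1) by auto
    qed
  qed
  have "(\<lambda>s. \<bar>x s\<bar>) integrable_on cbox 0 s0" by (rule integrable_on_little_subintervals[OF loc])
  then have "(\<lambda>s. \<bar>x s\<bar>) absolutely_integrable_on {0..s0}"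
    by (intro nonnegative_absolutely_integrable_1) auto
  then have "integrable lebesgue (\<lambda>s. indicator {0..s0} s *\<^sub>R \<bar>x s\<bar>)" unfolding set_integrable_def .
  then have "integrable lborel (\<lambda>s. indicator {0..s0} s *\<^sub>R \<bar>x s\<bar>)"
    by (subst integrable_completion[symmetric]) (use xm in measurable)
  from integrableD(2)[OF this] show ?thesis by (simp add: top.not_eq_extremum)
qed


lemma volterra_bound:
  fixes M :: "'a measure" and G :: "real \<Rightarrow> real" and X u Z :: "real \<Rightarrow> 'a \<Rightarrow> real"
  assumes P: "prob_space M" and T: "0 < T" and ab: "0 \<le> \<alpha>" "0 \<le> \<beta>" "0 \<le> \<sigma>" and bpos: "0 < \<beta>"
    and Gc: "continuous_on {0..T} G" and GL: "\<forall>r\<in>{0..T}. \<bar>G r\<bar> \<le> L" and L0: "0 \<le> L"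
    and Zm: "\<forall>t\<in>{0..T}. Z t \<in> borel_measurable M"
    and Zb: "\<forall>t\<in>{0..T}. (\<integral>\<^sup>+\<omega>. ennreal \<bar>Z t \<omega>\<bar> \<partial>M) \<le> ennreal Cz" and Cz: "0 \<le> Cz"
    and um: "(\<lambda>(\<omega>,s). u s \<omega>) \<in> borel_measurable (OmegaT M T)"
    and uU: "(\<integral>\<^sup>+\<omega>. (\<integral>\<^sup>+s. ennreal \<bar>u s \<omega>\<bar> \<partial>(restrict_space lborel {0..T})) \<partial>M) \<le> ennreal U" and U0: "0 \<le> U"
    and X: "volterra_solution M T G \<alpha> \<beta> \<sigma> x0 Z u X"
  shows "integrable M (\<lambda>\<omega>. X T \<omega>) \<and>
    (\<integral>\<omega>. X T \<omega> \<partial>M) \<le> (1 + \<beta>*L*T*(2*exp((2*\<beta>*L+1)*T))) * (\<bar>x0\<bar> + \<sigma>*Cz + \<alpha>*L*U)"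
proof -
  interpret prob_space M by (rule P)
  define R where "R = restrict_space lborel {0..T::real}"
  have spR: "space R = {0..T}" by (simp add: R_def)
  have setsR: "A \<in> sets borel \<Longrightarrow> A \<inter> {0..T} \<in> sets R" for A
    by (auto simp: R_def sets_restrict_space)
  interpret R: sigma_finite_measure R
    unfolding R_def by (rule sigma_finite_measure_restrict_space) (auto intro: sigma_finite_lborel)
  interpret MR: pair_sigma_finite M R by unfold_locales
  have OT: "OmegaT M T = M \<Otimes>\<^sub>M R" by (simp add: OmegaT_def R_def)
  have Xm: "(\<lambda>(\<omega>,s). X s \<omega>) \<in> borel_measurable (M \<Otimes>\<^sub>M R)"
    and Xt: "\<forall>t\<in>{0..T}. X t \<in> borel_measurable M"
    and Xeq: "\<forall>t\<in>{0..T}. AE \<omega> in M.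
        set_integrable lborel {0..t} (\<lambda>s. G (t - s) * (\<alpha> * u s \<omega> - \<beta> * X s \<omega>)) \<and>
        X t \<omega> = x0 + set_lebesgue_integral lborel {0..t} (\<lambda>s. G (t - s) * (\<alpha> * u s \<omega> - \<beta> * X s \<omega>))
                  + \<sigma> * Z t \<omega>"
    using X unfolding volterra_solution_def OT by auto
  have um': "(\<lambda>(\<omega>,s). u s \<omega>) \<in> borel_measurable (M \<Otimes>\<^sub>M R)" using um OT by simp
  have Xm2[measurable]: "(\<lambda>x. X (snd x) (fst x)) \<in> borel_measurable (M \<Otimes>\<^sub>M R)"
    using Xm by (simp add: split_beta')
  have idR: "(\<lambda>s::real. s) \<in> borel_measurable R"
    unfolding R_def by (rule measurable_restrict_space1) simp
  define Gt where "Gt t s = indicator {0..t} s * \<bar>G (t - s)\<bar>" for t s :: real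
  have Gtm: "Gt t \<in> borel_measurable borel" if "t \<in> {0..T}" for t
  proof -
    have "continuous_on {0..t} (\<lambda>s. \<bar>G (t - s)\<bar>)"
      by (intro continuous_intros continuous_on_compose2[OF Gc]) (use that in auto)
    from borel_measurable_continuous_on_indicator[OF _ this] show ?thesis
      by (simp add: Gt_def[abs_def])
  qed
  have GtR: "Gt t \<in> borel_measurable R" if "t \<in> {0..T}" for t
    unfolding R_def by (rule measurable_restrict_space1) (use Gtm[OF that] in simp)
  have Gt0: "0 \<le> Gt t s" for t s by (simp add: Gt_def)
  have GtL: "Gt t s \<le> L * indicator {0..t} s" if "t \<in> {0..T}" for t s
  proof (cases "s \<in> {0..t}")
    case True
    then have "t - s \<in> {0..T}" using that by auto
    then show ?thesis using GL True by (simp add: Gt_def)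
  qed (simp add: Gt_def)
  have GtT: "Gt T s = \<bar>G (T - s)\<bar>" if "s \<in> {0..T}" for s
    using that by (simp add: Gt_def)

  have pw: "AE \<omega> in M. ennreal \<bar>X t \<omega>\<bar> \<le> ennreal \<bar>x0\<bar>
      + ennreal \<alpha> * (\<integral>\<^sup>+s. ennreal (Gt t s * \<bar>u s \<omega>\<bar>) \<partial>R)
      + ennreal \<beta> * (\<integral>\<^sup>+s. ennreal (Gt t s * \<bar>X s \<omega>\<bar>) \<partial>R)
      + ennreal \<sigma> * ennreal \<bar>Z t \<omega>\<bar>" if t: "t \<in> {0..T}" for t
  proof -
    have "AE \<omega> in M. set_integrable lborel {0..t} (\<lambda>s. G (t - s) * (\<alpha> * u s \<omega> - \<beta> * X s \<omega>)) \<and>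
        X t \<omega> = x0 + set_lebesgue_integral lborel {0..t} (\<lambda>s. G (t - s) * (\<alpha> * u s \<omega> - \<beta> * X s \<omega>))
                  + \<sigma> * Z t \<omega>" using Xeq t by blast
    then show ?thesis
    proof (rule AE_mp[OF _ AE_I2[OF impI]])
      fix \<omega> assume \<omega>: "\<omega> \<in> space M" and H: "set_integrable lborel {0..t} (\<lambda>s. G (t - s) * (\<alpha> * u s \<omega> - \<beta> * X s \<omega>)) \<and>
        X t \<omega> = x0 + set_lebesgue_integral lborel {0..t} (\<lambda>s. G (t - s) * (\<alpha> * u s \<omega> - \<beta> * X s \<omega>))
                  + \<sigma> * Z t \<omega>"
      define f where "f s = G (t - s) * (\<alpha> * u s \<omega> - \<beta> * X s \<omega>)" for s
      have SI: "set_integrable lborel {0..t} f" and eq: "X t \<omega> = x0 + set_lebesgue_integral lborel {0..t} f + \<sigma> * Z t \<omega>"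
        using H by (simp_all add: f_def[abs_def])
      define J where "J = (\<integral>s. indicator {0..t} s * \<bar>f s\<bar> \<partial>lborel)"
      have intJ: "integrable lborel (\<lambda>s. indicator {0..t} s * \<bar>f s\<bar>)"
        using integrable_norm[OF SI[unfolded set_integrable_def]] by (simp add: abs_mult)
      have IJ: "\<bar>set_lebesgue_integral lborel {0..t} f\<bar> \<le> J"
        using set_integral_norm_bound[OF SI] by (simp add: J_def set_lebesgue_integral_def)
      have uR: "(\<lambda>s. u s \<omega>) \<in> borel_measurable R" using measurable_Pair2[OF um' \<omega>] by simp
      have XR: "(\<lambda>s. X s \<omega>) \<in> borel_measurable R" using measurable_Pair2[OF Xm \<omega>] by simp
      have "ennreal J = (\<integral>\<^sup>+s. ennreal (indicator {0..t} s * \<bar>f s\<bar>) \<partial>lborel)"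
        unfolding J_def by (rule nn_integral_eq_integral[symmetric, OF intJ]) auto
      also have "\<dots> = (\<integral>\<^sup>+s. ennreal (indicator {0..t} s * \<bar>f s\<bar>) * indicator {0..T} s \<partial>lborel)"
        using t by (intro nn_integral_cong) (auto simp: indicator_def)
      also have "\<dots> = (\<integral>\<^sup>+s. ennreal (indicator {0..t} s * \<bar>f s\<bar>) \<partial>R)"
        unfolding R_def by (rule nn_integral_restrict_space[symmetric]) auto
      also have "\<dots> \<le> (\<integral>\<^sup>+s. ennreal \<alpha> * ennreal (Gt t s * \<bar>u s \<omega>\<bar>) + ennreal \<beta> * ennreal (Gt t s * \<bar>X s \<omega>\<bar>) \<partial>R)"
      proof (intro nn_integral_mono)
        fix s
        have "indicator {0..t} s * \<bar>f s\<bar> \<le> \<alpha> * (Gt t s * \<bar>u s \<omega>\<bar>) + \<beta> * (Gt t s * \<bar>X s \<omega>\<bar>)"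
        proof (cases "s \<in> {0..t}")
          case True
          have "\<bar>f s\<bar> = \<bar>G (t - s)\<bar> * \<bar>\<alpha> * u s \<omega> - \<beta> * X s \<omega>\<bar>" by (simp add: f_def abs_mult)
          also have "\<dots> \<le> \<bar>G (t - s)\<bar> * (\<alpha> * \<bar>u s \<omega>\<bar> + \<beta> * \<bar>X s \<omega>\<bar>)"
          proof (rule mult_left_mono)
            have "\<bar>\<alpha> * u s \<omega> - \<beta> * X s \<omega>\<bar> \<le> \<bar>\<alpha> * u s \<omega>\<bar> + \<bar>\<beta> * X s \<omega>\<bar>" by (rule abs_triangle_ineq4)
            then show "\<bar>\<alpha> * u s \<omega> - \<beta> * X s \<omega>\<bar> \<le> \<alpha> * \<bar>u s \<omega>\<bar> + \<beta> * \<bar>X s \<omega>\<bar>"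
              using ab by (simp add: abs_mult)
          qed simp
          finally show ?thesis using True by (simp add: Gt_def algebra_simps)
        qed (simp add: Gt_def)
        then show "ennreal (indicator {0..t} s * \<bar>f s\<bar>) \<le> ennreal \<alpha> * ennreal (Gt t s * \<bar>u s \<omega>\<bar>) + ennreal \<beta> * ennreal (Gt t s * \<bar>X s \<omega>\<bar>)"
        proof -
          have "ennreal (indicator {0..t} s * \<bar>f s\<bar>) \<le> ennreal (\<alpha> * (Gt t s * \<bar>u s \<omega>\<bar>) + \<beta> * (Gt t s * \<bar>X s \<omega>\<bar>))"
            by (rule ennreal_leI) fact
          also have "\<dots> = ennreal \<alpha> * ennreal (Gt t s * \<bar>u s \<omega>\<bar>) + ennreal \<beta> * ennreal (Gt t s * \<bar>X s \<omega>\<bar>)"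
            using ab Gt0[of t s] by (simp add: ennreal_mult)
          finally show ?thesis .
        qed
      qed
      also have "\<dots> = ennreal \<alpha> * (\<integral>\<^sup>+s. ennreal (Gt t s * \<bar>u s \<omega>\<bar>) \<partial>R) + ennreal \<beta> * (\<integral>\<^sup>+s. ennreal (Gt t s * \<bar>X s \<omega>\<bar>) \<partial>R)"
      proof -
        have m1: "(\<lambda>s. ennreal (Gt t s * \<bar>u s \<omega>\<bar>)) \<in> borel_measurable R"
          using GtR[OF t] uR by measurable
        have m2: "(\<lambda>s. ennreal (Gt t s * \<bar>X s \<omega>\<bar>)) \<in> borel_measurable R"
          using GtR[OF t] XR by measurable
        show ?thesis
          by (subst nn_integral_add) (use m1 m2 in \<open>auto simp: nn_integral_cmult\<close>)
      qed
      finally have Jb: "ennreal J \<le> \<dots>" .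
      have J0: "0 \<le> J" unfolding J_def by (intro integral_nonneg_AE) auto
      have "\<bar>X t \<omega>\<bar> \<le> \<bar>x0\<bar> + \<bar>set_lebesgue_integral lborel {0..t} f\<bar> + \<bar>\<sigma> * Z t \<omega>\<bar>"
        unfolding eq by (rule order_trans[OF abs_triangle_ineq add_right_mono[OF abs_triangle_ineq]])
      also have "\<bar>\<sigma> * Z t \<omega>\<bar> = \<sigma> * \<bar>Z t \<omega>\<bar>" using ab by (simp add: abs_mult)
      finally have "\<bar>X t \<omega>\<bar> \<le> \<bar>x0\<bar> + J + \<sigma> * \<bar>Z t \<omega>\<bar>" using IJ by linarith
      then have "ennreal \<bar>X t \<omega>\<bar> \<le> ennreal (\<bar>x0\<bar> + J + \<sigma> * \<bar>Z t \<omega>\<bar>)" by (rule ennreal_leI)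
      also have "\<dots> = ennreal \<bar>x0\<bar> + ennreal J + ennreal \<sigma> * ennreal \<bar>Z t \<omega>\<bar>"
        using J0 ab by (simp add: ennreal_mult)
      also have "\<dots> \<le> ennreal \<bar>x0\<bar>
      + (ennreal \<alpha> * (\<integral>\<^sup>+s. ennreal (Gt t s * \<bar>u s \<omega>\<bar>) \<partial>R)
      + ennreal \<beta> * (\<integral>\<^sup>+s. ennreal (Gt t s * \<bar>X s \<omega>\<bar>) \<partial>R))
      + ennreal \<sigma> * ennreal \<bar>Z t \<omega>\<bar>"
        by (intro add_mono Jb order_refl)
      finally show "ennreal \<bar>X t \<omega>\<bar> \<le> ennreal \<bar>x0\<bar>
      + ennreal \<alpha> * (\<integral>\<^sup>+s. ennreal (Gt t s * \<bar>u s \<omega>\<bar>) \<partial>R)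
      + ennreal \<beta> * (\<integral>\<^sup>+s. ennreal (Gt t s * \<bar>X s \<omega>\<bar>) \<partial>R)
      + ennreal \<sigma> * ennreal \<bar>Z t \<omega>\<bar>" by (simp add: add.assoc)
    qed
  qed

  have ufin: "AE \<omega> in M. (\<integral>\<^sup>+s. ennreal \<bar>u s \<omega>\<bar> \<partial>R) < \<infinity>"
  proof -
    have m: "(\<lambda>\<omega>. \<integral>\<^sup>+s. ennreal \<bar>u s \<omega>\<bar> \<partial>R) \<in> borel_measurable M"
      using um' by measurable
    have "(\<integral>\<^sup>+\<omega>. (\<integral>\<^sup>+s. ennreal \<bar>u s \<omega>\<bar> \<partial>R) \<partial>M) \<noteq> \<infinity>"
      using uU by (auto simp: R_def top_unique)
    from nn_integral_PInf_AE[OF m this] show ?thesis by (simp add: top.not_eq_extremum)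
  qed

  define Gs where "Gs t s = indicator {0..t} s * G (t - s)" for t s :: real
  have Gsm: "Gs t \<in> borel_measurable borel" if "t \<in> {0..T}" for t
  proof -
    have "continuous_on {0..t} (\<lambda>s. G (t - s))"
      by (intro continuous_intros continuous_on_compose2[OF Gc]) (use that in auto)
    from borel_measurable_continuous_on_indicator[OF _ this] show ?thesis
      by (simp add: Gs_def[abs_def])
  qed
  have ext: "(\<lambda>s. if s \<in> {0..T} then f s else 0) \<in> borel_measurable lborel"
    if "f \<in> borel_measurable R" for f :: "real \<Rightarrow> real"
    using that unfolding R_def by (subst (asm) measurable_restrict_space_iff) auto

  have uint: "set_integrable lborel {0..t} (\<lambda>s. G (t - s) * u s \<omega>)"
    if \<omega>: "\<omega> \<in> space M" and fin: "(\<integral>\<^sup>+s. ennreal \<bar>u s \<omega>\<bar> \<partial>R) < \<infinity>" and t: "t \<in> {0..T}" for \<omega> t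
  proof -
    have uR: "(\<lambda>s. u s \<omega>) \<in> borel_measurable R" using measurable_Pair2[OF um' \<omega>] by simp
    have eqf: "(\<lambda>s. indicator {0..t} s *\<^sub>R (G (t - s) * u s \<omega>)) = (\<lambda>s. Gs t s * (if s \<in> {0..T} then u s \<omega> else 0))"
      using t by (auto simp: Gs_def indicator_def fun_eq_iff)
    have "integrable lborel (\<lambda>s. indicator {0..t} s *\<^sub>R (G (t - s) * u s \<omega>))"
    proof (rule integrableI_bounded)
      show "(\<lambda>s. indicator {0..t} s *\<^sub>R (G (t - s) * u s \<omega>)) \<in> borel_measurable lborel"
        unfolding eqf using Gsm[OF t] ext[OF uR] by measurable
      have "(\<integral>\<^sup>+s. ennreal (norm (indicator {0..t} s *\<^sub>R (G (t - s) * u s \<omega>))) \<partial>lborel)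
          \<le> (\<integral>\<^sup>+s. ennreal L * (ennreal \<bar>u s \<omega>\<bar> * indicator {0..T} s) \<partial>lborel)"
      proof (intro nn_integral_mono)
        fix s show "ennreal (norm (indicator {0..t} s *\<^sub>R (G (t - s) * u s \<omega>))) \<le> ennreal L * (ennreal \<bar>u s \<omega>\<bar> * indicator {0..T} s)"
        proof (cases "s \<in> {0..t}")
          case True
          then have "t - s \<in> {0..T}" "s \<in> {0..T}" using t by auto
          then have "\<bar>G (t - s)\<bar> * \<bar>u s \<omega>\<bar> \<le> L * \<bar>u s \<omega>\<bar>" using GL by (intro mult_right_mono) auto
          then show ?thesis using True \<open>s \<in> {0..T}\<close> L0 by (simp add: abs_mult ennreal_mult[symmetric] ennreal_leI)
        qed simp
      qed
      also have "\<dots> = (\<integral>\<^sup>+s. ennreal L * ennreal \<bar>u s \<omega>\<bar> \<partial>R)"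
        unfolding R_def by (subst nn_integral_restrict_space) (auto simp: mult.assoc)
      also have "\<dots> = ennreal L * (\<integral>\<^sup>+s. ennreal \<bar>u s \<omega>\<bar> \<partial>R)"
        by (rule nn_integral_cmult) (use uR in measurable)
      also have "\<dots> < \<infinity>" using fin by (simp add: ennreal_mult_less_top)
      finally show "(\<integral>\<^sup>+s. ennreal (norm (indicator {0..t} s *\<^sub>R (G (t - s) * u s \<omega>))) \<partial>lborel) < \<infinity>" .
    qed
    then show ?thesis unfolding set_integrable_def .
  qed

  have loc: "AE \<omega> in M. \<forall>s0\<in>{0..T}. (\<exists>r\<in>{0..T}. G r \<noteq> 0 \<and> s0 \<le> T - r) \<longrightarrow>
      (\<integral>\<^sup>+s. ennreal (indicator {0..s0} s * \<bar>X s \<omega>\<bar>) \<partial>R) < \<infinity>"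
  proof -
    define Q where "Q = {t. t \<in> {0..T} \<and> (t \<in> \<rat> \<or> t = T)}"
    have Qc: "countable Q"
      by (rule countable_subset[of _ "insert T \<rat>"]) (auto simp: Q_def countable_rat)
    have AEQ: "AE \<omega> in M. \<forall>t\<in>Q. set_integrable lborel {0..t} (\<lambda>s. G (t - s) * (\<alpha> * u s \<omega> - \<beta> * X s \<omega>))"
      by (rule AE_ball_countable[OF Qc, THEN iffD2]) (use Xeq in \<open>auto simp: Q_def elim: AE_mp\<close>)
    show ?thesis
    proof (rule AE_mp[OF AE_conj_iff[THEN iffD2, OF conjI[OF AEQ ufin]] AE_I2[OF impI]])
      fix \<omega> assume \<omega>: "\<omega> \<in> space M" and H: "(\<forall>t\<in>Q. set_integrable lborel {0..t} (\<lambda>s. G (t - s) * (\<alpha> * u s \<omega> - \<beta> * X s \<omega>)))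
         \<and> (\<integral>\<^sup>+s. ennreal \<bar>u s \<omega>\<bar> \<partial>R) < \<infinity>"
      have XR: "(\<lambda>s. X s \<omega>) \<in> borel_measurable R" using measurable_Pair2[OF Xm \<omega>] by simp
      define x where "x s = (if s \<in> {0..T} then X s \<omega> else 0)" for s
      have xm: "x \<in> borel_measurable lborel" unfolding x_def[abs_def] by (rule ext[OF XR])
      have hyp: "set_integrable lborel {0..t} (\<lambda>s. G (t - s) * x s)"
        if t: "t \<in> {0..T}" "t \<in> \<rat> \<or> t = T" for t
      proof -
        have I1: "set_integrable lborel {0..t} (\<lambda>s. G (t - s) * (\<alpha> * u s \<omega> - \<beta> * X s \<omega>))"
          using H t by (auto simp: Q_def)
        have I2: "set_integrable lborel {0..t} (\<lambda>s. \<alpha> * (G (t - s) * u s \<omega>))"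
          using uint[OF \<omega> conjunct2[OF H] t(1)] by auto
        have "set_integrable lborel {0..t} (\<lambda>s. (1/\<beta>) * (\<alpha> * (G (t - s) * u s \<omega>) - G (t - s) * (\<alpha> * u s \<omega> - \<beta> * X s \<omega>)))"
          using I1 I2 by auto
        moreover have "(1/\<beta>) * (\<alpha> * (G (t - s) * u s \<omega>) - G (t - s) * (\<alpha> * u s \<omega> - \<beta> * X s \<omega>)) = G (t - s) * x s"
          if "s \<in> {0..t}" for s
          using that t bpos by (auto simp: x_def field_simps)
        ultimately show ?thesis by (subst set_integrable_cong[OF refl refl]) auto
      qed
      show "\<forall>s0\<in>{0..T}. (\<exists>r\<in>{0..T}. G r \<noteq> 0 \<and> s0 \<le> T - r) \<longrightarrow>
          (\<integral>\<^sup>+s. ennreal (indicator {0..s0} s * \<bar>X s \<omega>\<bar>) \<partial>R) < \<infinity>"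
      proof (intro ballI impI)
        fix s0 assume s0: "s0 \<in> {0..T}" and "\<exists>r\<in>{0..T}. G r \<noteq> 0 \<and> s0 \<le> T - r"
        then obtain r where r: "r \<in> {0..T}" "G r \<noteq> 0" "s0 \<le> T - r" by blast
        have "(\<integral>\<^sup>+s. ennreal (indicator {0..s0} s * \<bar>x s\<bar>) \<partial>lborel) < \<infinity>"
          by (rule locint[OF T Gc _ _ r(2) xm hyp _ r(3)]) (use r s0 in auto)
        also have "(\<integral>\<^sup>+s. ennreal (indicator {0..s0} s * \<bar>x s\<bar>) \<partial>lborel)
            = (\<integral>\<^sup>+s. ennreal (indicator {0..s0} s * \<bar>X s \<omega>\<bar>) * indicator {0..T} s \<partial>lborel)"
          using s0 by (intro nn_integral_cong) (auto simp: x_def indicator_def)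
        also have "\<dots> = (\<integral>\<^sup>+s. ennreal (indicator {0..s0} s * \<bar>X s \<omega>\<bar>) \<partial>R)"
          unfolding R_def by (rule nn_integral_restrict_space[symmetric]) auto
        finally show "(\<integral>\<^sup>+s. ennreal (indicator {0..s0} s * \<bar>X s \<omega>\<bar>) \<partial>R) < \<infinity>" .
      qed
    qed
  qed

  define A where "A = \<bar>x0\<bar> + \<sigma>*Cz + \<alpha>*L*U"
  define C where "C = 2 * A * exp ((2*(\<beta>*L)+1) * T)"
  have A0: "0 \<le> A" using ab Cz L0 U0 by (simp add: A_def)

  have gron: "\<forall>t\<in>{0..s0}. (\<integral>\<^sup>+\<omega>. ennreal \<bar>X t \<omega>\<bar> \<partial>M) \<le> ennreal C"
    if s0: "s0 \<in> {0..T}" and fin: "AE \<omega> in M. (\<integral>\<^sup>+s. ennreal (indicator {0..s0} s * \<bar>X s \<omega>\<bar>) \<partial>R) < \<infinity>" for s0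
  proof -
    define \<psi> where "\<psi> \<omega> t = (\<integral>\<^sup>+s. ennreal (indicator {0..t} s * \<bar>X s \<omega>\<bar>) \<partial>R)" for \<omega> t
    define Om where "Om N = {\<omega> \<in> space M. \<psi> \<omega> s0 \<le> of_nat N}" for N :: nat
    define F where "F N t = (\<integral>\<^sup>+\<omega>. indicator (Om N) \<omega> * ennreal \<bar>X t \<omega>\<bar> \<partial>M)" for N :: nat and t
    have \<psi>m: "(\<lambda>\<omega>. \<psi> \<omega> t) \<in> borel_measurable M" for t
      unfolding \<psi>_def using Xm idR by measurable
    have Omm: "Om N \<in> sets M" for N
    proof -
      have "Om N = (\<lambda>\<omega>. \<psi> \<omega> s0) -` {..of_nat N} \<inter> space M" by (auto simp: Om_def)
      then show ?thesis using \<psi>m[of s0] by (simp add: measurable_sets)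
    qed
    have Xsw: "(\<lambda>(s,\<omega>). X s \<omega>) \<in> borel_measurable (R \<Otimes>\<^sub>M M)"
      using measurable_pair_swap[OF Xm] by simp
    have Fm: "F N \<in> borel_measurable R" for N
    proof -
      have "(\<lambda>(s,\<omega>). indicator (Om N) \<omega> * ennreal \<bar>X s \<omega>\<bar>) \<in> borel_measurable (R \<Otimes>\<^sub>M M)"
        using Xsw Omm[of N] by measurable
      then show ?thesis unfolding F_def[abs_def] by (rule borel_measurable_nn_integral)
    qed
    have \<psi>mono: "\<psi> \<omega> t \<le> \<psi> \<omega> t'" if "t \<le> t'" for \<omega> t t'
      unfolding \<psi>_def using that by (intro nn_integral_mono ennreal_leI mult_right_mono) (auto simp: indicator_def)
    have fub: "(\<integral>\<^sup>+\<omega>. indicator (Om N) \<omega> * \<psi> \<omega> t \<partial>M) = (\<integral>\<^sup>+s. F N s * indicator {0..t} s \<partial>lborel)"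
      if t: "t \<in> {0..T}" for N t
    proof -
      have jm: "(\<lambda>(\<omega>,s). indicator (Om N) \<omega> * ennreal (indicator {0..t} s * \<bar>X s \<omega>\<bar>)) \<in> borel_measurable (M \<Otimes>\<^sub>M R)"
        using Xm Omm[of N] idR by measurable
      have "(\<integral>\<^sup>+\<omega>. indicator (Om N) \<omega> * \<psi> \<omega> t \<partial>M)
          = (\<integral>\<^sup>+\<omega>. (\<integral>\<^sup>+s. indicator (Om N) \<omega> * ennreal (indicator {0..t} s * \<bar>X s \<omega>\<bar>) \<partial>R) \<partial>M)"
      proof (intro nn_integral_cong)
        fix \<omega> assume \<omega>: "\<omega> \<in> space M"
        have XR: "(\<lambda>s. X s \<omega>) \<in> borel_measurable R" using measurable_Pair2[OF Xm \<omega>] by simp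
        show "indicator (Om N) \<omega> * \<psi> \<omega> t = (\<integral>\<^sup>+s. indicator (Om N) \<omega> * ennreal (indicator {0..t} s * \<bar>X s \<omega>\<bar>) \<partial>R)"
          unfolding \<psi>_def by (rule nn_integral_cmult[symmetric]) (use XR idR in measurable)
      qed
      also have "\<dots> = (\<integral>\<^sup>+s. (\<integral>\<^sup>+\<omega>. indicator (Om N) \<omega> * ennreal (indicator {0..t} s * \<bar>X s \<omega>\<bar>) \<partial>M) \<partial>R)"
        using MR.Fubini'[OF jm] by simp
      also have "\<dots> = (\<integral>\<^sup>+s. F N s * indicator {0..t} s \<partial>R)"
      proof (intro nn_integral_cong)
        fix s
        show "(\<integral>\<^sup>+\<omega>. indicator (Om N) \<omega> * ennreal (indicator {0..t} s * \<bar>X s \<omega>\<bar>) \<partial>M) = F N s * indicator {0..t} s"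
          unfolding F_def by (cases "s \<in> {0..t}") auto
      qed
      also have "\<dots> = (\<integral>\<^sup>+s. F N s * indicator {0..t} s \<partial>lborel)"
        unfolding R_def using t by (subst nn_integral_restrict_space) (auto intro!: nn_integral_cong simp: indicator_def)
      finally show ?thesis .
    qed
    have \<psi>N: "(\<integral>\<^sup>+\<omega>. indicator (Om N) \<omega> * \<psi> \<omega> t \<partial>M) \<le> of_nat N" if "t \<le> s0" for N t
    proof -
      have "(\<integral>\<^sup>+\<omega>. indicator (Om N) \<omega> * \<psi> \<omega> t \<partial>M) \<le> (\<integral>\<^sup>+\<omega>. of_nat N \<partial>M)"
      proof (intro nn_integral_mono)
        fix \<omega> show "indicator (Om N) \<omega> * \<psi> \<omega> t \<le> of_nat N"
          using \<psi>mono[OF that, of \<omega>] by (auto simp: Om_def indicator_def)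
      qed
      also have "\<dots> = of_nat N" by (simp add: emeasure_space_1)
      finally show ?thesis .
    qed
    have rec0: "F N t \<le> ennreal A + ennreal (\<beta> * L) * (\<integral>\<^sup>+\<omega>. indicator (Om N) \<omega> * \<psi> \<omega> t \<partial>M)"
      if t: "t \<in> {0..T}" for N t
    proof -
      define Uw where "Uw \<omega> = (\<integral>\<^sup>+s. ennreal \<bar>u s \<omega>\<bar> \<partial>R)" for \<omega>
      have Uwm: "Uw \<in> borel_measurable M" unfolding Uw_def[abs_def] using um' by measurable
      have Ztm: "Z t \<in> borel_measurable M" using Zm t by auto
      have ptw: "AE \<omega> in M. indicator (Om N) \<omega> * ennreal \<bar>X t \<omega>\<bar> \<le>
          ennreal \<bar>x0\<bar> + ennreal (\<alpha> * L) * Uw \<omega> + ennreal \<sigma> * ennreal \<bar>Z t \<omega>\<bar>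
          + ennreal (\<beta> * L) * (indicator (Om N) \<omega> * \<psi> \<omega> t)"
      proof (rule AE_mp[OF pw[OF t] AE_I2[OF impI]])
        fix \<omega> assume \<omega>: "\<omega> \<in> space M" and H: "ennreal \<bar>X t \<omega>\<bar> \<le> ennreal \<bar>x0\<bar>
          + ennreal \<alpha> * (\<integral>\<^sup>+s. ennreal (Gt t s * \<bar>u s \<omega>\<bar>) \<partial>R)
          + ennreal \<beta> * (\<integral>\<^sup>+s. ennreal (Gt t s * \<bar>X s \<omega>\<bar>) \<partial>R)
          + ennreal \<sigma> * ennreal \<bar>Z t \<omega>\<bar>"
        have uR: "(\<lambda>s. u s \<omega>) \<in> borel_measurable R" using measurable_Pair2[OF um' \<omega>] by simp
        have XR: "(\<lambda>s. X s \<omega>) \<in> borel_measurable R" using measurable_Pair2[OF Xm \<omega>] by simp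
        have GU: "(\<integral>\<^sup>+s. ennreal (Gt t s * \<bar>u s \<omega>\<bar>) \<partial>R) \<le> ennreal L * Uw \<omega>"
        proof -
          have "(\<integral>\<^sup>+s. ennreal (Gt t s * \<bar>u s \<omega>\<bar>) \<partial>R) \<le> (\<integral>\<^sup>+s. ennreal L * ennreal \<bar>u s \<omega>\<bar> \<partial>R)"
          proof (intro nn_integral_mono)
            fix s have "Gt t s \<le> L" using GtL[OF t, of s] L0 by (cases "s \<in> {0..t}") auto
            then have "Gt t s * \<bar>u s \<omega>\<bar> \<le> L * \<bar>u s \<omega>\<bar>" by (intro mult_right_mono) auto
            then show "ennreal (Gt t s * \<bar>u s \<omega>\<bar>) \<le> ennreal L * ennreal \<bar>u s \<omega>\<bar>"
              using L0 by (simp add: ennreal_mult[symmetric] ennreal_leI)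
          qed
          also have "\<dots> = ennreal L * Uw \<omega>" unfolding Uw_def
            by (rule nn_integral_cmult) (use uR in measurable)
          finally show ?thesis .
        qed
        have GX: "(\<integral>\<^sup>+s. ennreal (Gt t s * \<bar>X s \<omega>\<bar>) \<partial>R) \<le> ennreal L * \<psi> \<omega> t"
        proof -
          have "(\<integral>\<^sup>+s. ennreal (Gt t s * \<bar>X s \<omega>\<bar>) \<partial>R) \<le> (\<integral>\<^sup>+s. ennreal L * ennreal (indicator {0..t} s * \<bar>X s \<omega>\<bar>) \<partial>R)"
          proof (intro nn_integral_mono)
            fix s
            have "Gt t s * \<bar>X s \<omega>\<bar> \<le> L * indicator {0..t} s * \<bar>X s \<omega>\<bar>" using GtL[OF t, of s] by (intro mult_right_mono) auto
            then show "ennreal (Gt t s * \<bar>X s \<omega>\<bar>) \<le> ennreal L * ennreal (indicator {0..t} s * \<bar>X s \<omega>\<bar>)"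
              using L0 by (simp add: ennreal_mult[symmetric] ennreal_leI mult.assoc)
          qed
          also have "\<dots> = ennreal L * \<psi> \<omega> t" unfolding \<psi>_def
            by (rule nn_integral_cmult) (use XR idR in measurable)
          finally show ?thesis .
        qed
        show "indicator (Om N) \<omega> * ennreal \<bar>X t \<omega>\<bar> \<le>
          ennreal \<bar>x0\<bar> + ennreal (\<alpha> * L) * Uw \<omega> + ennreal \<sigma> * ennreal \<bar>Z t \<omega>\<bar>
          + ennreal (\<beta> * L) * (indicator (Om N) \<omega> * \<psi> \<omega> t)"
        proof (cases "\<omega> \<in> Om N")
          case True
          have "ennreal \<bar>X t \<omega>\<bar> \<le> ennreal \<bar>x0\<bar> + ennreal \<alpha> * (ennreal L * Uw \<omega>)
              + ennreal \<beta> * (ennreal L * \<psi> \<omega> t) + ennreal \<sigma> * ennreal \<bar>Z t \<omega>\<bar>"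
            by (rule order_trans[OF H]) (intro add_mono mult_left_mono order_refl GU GX; simp)
          also have "\<dots> = ennreal \<bar>x0\<bar> + ennreal (\<alpha> * L) * Uw \<omega> + ennreal \<sigma> * ennreal \<bar>Z t \<omega>\<bar>
              + ennreal (\<beta> * L) * \<psi> \<omega> t"
            using ab L0 by (simp add: ennreal_mult mult.assoc add_ac)
          finally show ?thesis using True by simp
        qed simp
      qed
      have "F N t \<le> (\<integral>\<^sup>+\<omega>. ennreal \<bar>x0\<bar> + ennreal (\<alpha> * L) * Uw \<omega> + ennreal \<sigma> * ennreal \<bar>Z t \<omega>\<bar>
          + ennreal (\<beta> * L) * (indicator (Om N) \<omega> * \<psi> \<omega> t) \<partial>M)"
        unfolding F_def by (rule nn_integral_mono_AE[OF ptw])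
      also have "\<dots> = ennreal \<bar>x0\<bar> + ennreal (\<alpha> * L) * (\<integral>\<^sup>+\<omega>. Uw \<omega> \<partial>M) + ennreal \<sigma> * (\<integral>\<^sup>+\<omega>. ennreal \<bar>Z t \<omega>\<bar> \<partial>M)
          + ennreal (\<beta> * L) * (\<integral>\<^sup>+\<omega>. indicator (Om N) \<omega> * \<psi> \<omega> t \<partial>M)"
        using Uwm Ztm \<psi>m[of t] Omm[of N]
        by (simp add: nn_integral_add nn_integral_cmult emeasure_space_1)
      also have "\<dots> \<le> ennreal \<bar>x0\<bar> + ennreal (\<alpha> * L) * ennreal U + ennreal \<sigma> * ennreal Cz
          + ennreal (\<beta> * L) * (\<integral>\<^sup>+\<omega>. indicator (Om N) \<omega> * \<psi> \<omega> t \<partial>M)"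
      proof -
        have "(\<integral>\<^sup>+\<omega>. Uw \<omega> \<partial>M) \<le> ennreal U" using uU by (simp add: Uw_def R_def)
        moreover have "(\<integral>\<^sup>+\<omega>. ennreal \<bar>Z t \<omega>\<bar> \<partial>M) \<le> ennreal Cz" using Zb t by auto
        ultimately show ?thesis by (intro add_mono mult_left_mono order_refl) auto
      qed
      also have "ennreal \<bar>x0\<bar> + ennreal (\<alpha> * L) * ennreal U + ennreal \<sigma> * ennreal Cz = ennreal A"
        using ab L0 U0 Cz by (simp add: A_def ennreal_mult ennreal_plus mult.assoc)
      finally show ?thesis .
    qed
    have rec: "\<forall>t\<in>{0..s0}. F N t \<le> ennreal A + ennreal (\<beta> * L) * (\<integral>\<^sup>+s. F N s * indicator {0..t} s \<partial>lborel)" for N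
      using rec0 fub s0 by auto
    have bnd: "\<forall>t\<in>{0..s0}. F N t \<le> ennreal (A + \<beta> * L * of_nat N)" for N
    proof
      fix t assume t: "t \<in> {0..s0}"
      have "F N t \<le> ennreal A + ennreal (\<beta> * L) * of_nat N"
      proof -
        have "ennreal (\<beta> * L) * (\<integral>\<^sup>+\<omega>. indicator (Om N) \<omega> * \<psi> \<omega> t \<partial>M) \<le> ennreal (\<beta> * L) * of_nat N"
          by (rule mult_left_mono) (use \<psi>N[of t N] t in auto)
        then show ?thesis using rec0[of t N] t s0 by (auto intro: order_trans add_left_mono)
      qed
      also have "\<dots> = ennreal (A + \<beta> * L * of_nat N)"
        using A0 ab L0 by (simp add: ennreal_mult ennreal_of_nat_eq_real_of_nat)
      finally show "F N t \<le> ennreal (A + \<beta> * L * of_nat N)" .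
    qed
    have FC: "F N t \<le> ennreal C" if t: "t \<in> {0..s0}" for N t
    proof -
      have "F N t \<le> ennreal (2 * A * exp ((2*(\<beta>*L)+1) * s0))"
        using gronwall_enn[of s0 A "\<beta>*L" "F N" "A + \<beta> * L * of_nat N", OF _ A0 _ bnd rec] s0 ab L0 t by auto
      also have "\<dots> \<le> ennreal C"
      proof -
        have "(2*(\<beta>*L)+1) * s0 \<le> (2*(\<beta>*L)+1) * T" using s0 ab L0 by (intro mult_left_mono) auto
        then show ?thesis unfolding C_def using A0 by (intro ennreal_leI mult_left_mono) auto
      qed
      finally show ?thesis .
    qed
    show ?thesis
    proof
      fix t assume t: "t \<in> {0..s0}"
      have inc: "incseq (\<lambda>N \<omega>. indicator (Om N) \<omega> * ennreal \<bar>X t \<omega>\<bar>)"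
      proof (rule incseq_SucI, rule le_funI)
        fix N \<omega> show "indicator (Om N) \<omega> * ennreal \<bar>X t \<omega>\<bar> \<le> indicator (Om (Suc N)) \<omega> * ennreal \<bar>X t \<omega>\<bar>"
          by (auto simp: Om_def indicator_def intro: order_trans)
      qed
      have Xtm: "X t \<in> borel_measurable M" using Xt t s0 by auto
      have "(\<integral>\<^sup>+\<omega>. ennreal \<bar>X t \<omega>\<bar> \<partial>M) = (\<integral>\<^sup>+\<omega>. (SUP N. indicator (Om N) \<omega> * ennreal \<bar>X t \<omega>\<bar>) \<partial>M)"
      proof (rule nn_integral_cong_AE)
        show "AE \<omega> in M. ennreal \<bar>X t \<omega>\<bar> = (SUP N. indicator (Om N) \<omega> * ennreal \<bar>X t \<omega>\<bar>)"
        proof (rule AE_mp[OF fin AE_I2[OF impI]])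
          fix \<omega> assume \<omega>: "\<omega> \<in> space M" and f: "(\<integral>\<^sup>+s. ennreal (indicator {0..s0} s * \<bar>X s \<omega>\<bar>) \<partial>R) < \<infinity>"
          obtain N where N: "\<psi> \<omega> s0 < of_nat N" using ennreal_Ex_less_of_nat[of "\<psi> \<omega> s0"] f by (auto simp: \<psi>_def)
          then have "\<omega> \<in> Om N" using \<omega> by (auto simp: Om_def)
          then have "ennreal \<bar>X t \<omega>\<bar> \<le> (SUP N. indicator (Om N) \<omega> * ennreal \<bar>X t \<omega>\<bar>)"
            by (intro SUP_upper2[of N]) auto
          moreover have "(SUP N. indicator (Om N) \<omega> * ennreal \<bar>X t \<omega>\<bar>) \<le> ennreal \<bar>X t \<omega>\<bar>"
            by (intro SUP_least) (auto simp: indicator_def)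
          ultimately show "ennreal \<bar>X t \<omega>\<bar> = (SUP N. indicator (Om N) \<omega> * ennreal \<bar>X t \<omega>\<bar>)" by (rule antisym)
        qed
      qed
      also have "\<dots> = (SUP N. F N t)"
        unfolding F_def by (rule nn_integral_monotone_convergence_SUP[OF inc]) (use Xtm Omm in measurable)
      also have "\<dots> \<le> ennreal C" using FC[OF t] by (intro SUP_least) auto
      finally show "(\<integral>\<^sup>+\<omega>. ennreal \<bar>X t \<omega>\<bar> \<partial>M) \<le> ennreal C" .
    qed
  qed

  have TT: "T \<in> {0..T}" using T by auto
  have C0: "0 \<le> C" using A0 by (simp add: C_def)
  have Fb: "ennreal \<bar>G (T - s)\<bar> * (\<integral>\<^sup>+\<omega>. ennreal \<bar>X s \<omega>\<bar> \<partial>M) \<le> ennreal (L * C)" if s: "s \<in> {0..T}" for s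
  proof (cases "G (T - s) = 0")
    case False
    have good: "\<exists>r\<in>{0..T}. G r \<noteq> 0 \<and> s \<le> T - r" using False s by (intro bexI[of _ "T - s"]) auto
    have fin: "AE \<omega> in M. (\<integral>\<^sup>+s'. ennreal (indicator {0..s} s' * \<bar>X s' \<omega>\<bar>) \<partial>R) < \<infinity>"
      using loc by eventually_elim (use s good in blast)
    have "(\<integral>\<^sup>+\<omega>. ennreal \<bar>X s \<omega>\<bar> \<partial>M) \<le> ennreal C" using gron[OF s fin] s by auto
    moreover have "\<bar>G (T - s)\<bar> \<le> L" using GL s by auto
    ultimately have "ennreal \<bar>G (T - s)\<bar> * (\<integral>\<^sup>+\<omega>. ennreal \<bar>X s \<omega>\<bar> \<partial>M) \<le> ennreal L * ennreal C"
      by (intro mult_mono) auto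
    then show ?thesis by (simp add: ennreal_mult[OF L0 C0])
  qed simp
  define Uw where "Uw \<omega> = (\<integral>\<^sup>+s. ennreal \<bar>u s \<omega>\<bar> \<partial>R)" for \<omega>
  have Uwm: "Uw \<in> borel_measurable M" unfolding Uw_def[abs_def] using um' by measurable
  have GtTR: "Gt T \<in> borel_measurable R" by (rule GtR[OF TT])
  have m1: "(\<lambda>\<omega>. \<integral>\<^sup>+s. ennreal (Gt T s * \<bar>u s \<omega>\<bar>) \<partial>R) \<in> borel_measurable M"
    using GtTR um' by measurable
  have jm: "(\<lambda>(\<omega>, s). ennreal (Gt T s * \<bar>X s \<omega>\<bar>)) \<in> borel_measurable (M \<Otimes>\<^sub>M R)"
    using GtTR Xm by measurable
  have m2: "(\<lambda>\<omega>. \<integral>\<^sup>+s. ennreal (Gt T s * \<bar>X s \<omega>\<bar>) \<partial>R) \<in> borel_measurable M"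
    using jm by measurable
  have ZTm: "Z T \<in> borel_measurable M" using Zm TT by auto
  have XTm: "X T \<in> borel_measurable M" using Xt TT by auto
  have GUb: "(\<integral>\<^sup>+s. ennreal (Gt T s * \<bar>u s \<omega>\<bar>) \<partial>R) \<le> ennreal L * Uw \<omega>" if \<omega>: "\<omega> \<in> space M" for \<omega>
  proof -
    have uR: "(\<lambda>s. u s \<omega>) \<in> borel_measurable R" using measurable_Pair2[OF um' \<omega>] by simp
    have "(\<integral>\<^sup>+s. ennreal (Gt T s * \<bar>u s \<omega>\<bar>) \<partial>R) \<le> (\<integral>\<^sup>+s. ennreal L * ennreal \<bar>u s \<omega>\<bar> \<partial>R)"
    proof (intro nn_integral_mono)
      fix s have "Gt T s \<le> L" using GtL[OF TT, of s] L0 by (cases "s \<in> {0..T}") auto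
      then have "Gt T s * \<bar>u s \<omega>\<bar> \<le> L * \<bar>u s \<omega>\<bar>" by (intro mult_right_mono) auto
      then show "ennreal (Gt T s * \<bar>u s \<omega>\<bar>) \<le> ennreal L * ennreal \<bar>u s \<omega>\<bar>"
        using L0 by (simp add: ennreal_mult[symmetric] ennreal_leI)
    qed
    also have "\<dots> = ennreal L * Uw \<omega>" unfolding Uw_def
      by (rule nn_integral_cmult) (use uR in measurable)
    finally show ?thesis .
  qed
  have XGint: "(\<integral>\<^sup>+\<omega>. (\<integral>\<^sup>+s. ennreal (Gt T s * \<bar>X s \<omega>\<bar>) \<partial>R) \<partial>M) \<le> ennreal (L * C * T)"
  proof -
    have "(\<integral>\<^sup>+\<omega>. (\<integral>\<^sup>+s. ennreal (Gt T s * \<bar>X s \<omega>\<bar>) \<partial>R) \<partial>M)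
        = (\<integral>\<^sup>+s. (\<integral>\<^sup>+\<omega>. ennreal (Gt T s * \<bar>X s \<omega>\<bar>) \<partial>M) \<partial>R)"
      using MR.Fubini'[of "\<lambda>\<omega> s. ennreal (Gt T s * \<bar>X s \<omega>\<bar>)"] jm by simp
    also have "\<dots> = (\<integral>\<^sup>+s. ennreal (Gt T s) * (\<integral>\<^sup>+\<omega>. ennreal \<bar>X s \<omega>\<bar> \<partial>M) \<partial>R)"
    proof (intro nn_integral_cong)
      fix s assume s: "s \<in> space R"
      have "X s \<in> borel_measurable M" using Xt s spR by auto
      then show "(\<integral>\<^sup>+\<omega>. ennreal (Gt T s * \<bar>X s \<omega>\<bar>) \<partial>M) = ennreal (Gt T s) * (\<integral>\<^sup>+\<omega>. ennreal \<bar>X s \<omega>\<bar> \<partial>M)"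
        using Gt0[of T s] by (subst nn_integral_cmult[symmetric]) (auto simp: ennreal_mult)
    qed
    also have "\<dots> \<le> (\<integral>\<^sup>+s. ennreal (L * C) \<partial>R)"
    proof (intro nn_integral_mono)
      fix s assume s: "s \<in> space R"
      then show "ennreal (Gt T s) * (\<integral>\<^sup>+\<omega>. ennreal \<bar>X s \<omega>\<bar> \<partial>M) \<le> ennreal (L * C)"
        using Fb[of s] GtT[of s] spR by simp
    qed
    also have "\<dots> = ennreal (L * C) * emeasure R (space R)" by simp
    also have "emeasure R (space R) = ennreal T"
      using T by (simp add: R_def emeasure_restrict_space spR)
    also have "ennreal (L * C) * ennreal T = ennreal (L * C * T)"
      by (rule ennreal_mult[symmetric]) (use L0 C0 T in auto)
    finally show ?thesis .
  qed
  have XTb: "(\<integral>\<^sup>+\<omega>. ennreal \<bar>X T \<omega>\<bar> \<partial>M) \<le> ennreal (A + \<beta> * (L * C * T))"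
  proof -
    have "(\<integral>\<^sup>+\<omega>. ennreal \<bar>X T \<omega>\<bar> \<partial>M) \<le> (\<integral>\<^sup>+\<omega>. ennreal \<bar>x0\<bar>
      + ennreal \<alpha> * (ennreal L * Uw \<omega>)
      + ennreal \<beta> * (\<integral>\<^sup>+s. ennreal (Gt T s * \<bar>X s \<omega>\<bar>) \<partial>R)
      + ennreal \<sigma> * ennreal \<bar>Z T \<omega>\<bar> \<partial>M)"
    proof (rule nn_integral_mono_AE)
      show "AE \<omega> in M. ennreal \<bar>X T \<omega>\<bar> \<le> ennreal \<bar>x0\<bar>
        + ennreal \<alpha> * (ennreal L * Uw \<omega>)
        + ennreal \<beta> * (\<integral>\<^sup>+s. ennreal (Gt T s * \<bar>X s \<omega>\<bar>) \<partial>R)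
        + ennreal \<sigma> * ennreal \<bar>Z T \<omega>\<bar>"
      proof (rule AE_mp[OF pw[OF TT] AE_I2[OF impI]])
        fix \<omega> assume \<omega>: "\<omega> \<in> space M" and elim: "ennreal \<bar>X T \<omega>\<bar> \<le> ennreal \<bar>x0\<bar>
          + ennreal \<alpha> * (\<integral>\<^sup>+s. ennreal (Gt T s * \<bar>u s \<omega>\<bar>) \<partial>R)
          + ennreal \<beta> * (\<integral>\<^sup>+s. ennreal (Gt T s * \<bar>X s \<omega>\<bar>) \<partial>R)
          + ennreal \<sigma> * ennreal \<bar>Z T \<omega>\<bar>"
        show "ennreal \<bar>X T \<omega>\<bar> \<le> ennreal \<bar>x0\<bar>
        + ennreal \<alpha> * (ennreal L * Uw \<omega>)
        + ennreal \<beta> * (\<integral>\<^sup>+s. ennreal (Gt T s * \<bar>X s \<omega>\<bar>) \<partial>R)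
        + ennreal \<sigma> * ennreal \<bar>Z T \<omega>\<bar>"
          by (rule order_trans[OF elim]) (intro add_mono mult_left_mono order_refl GUb[OF \<omega>]; simp)
      qed
    qed
    also have "\<dots> = ennreal \<bar>x0\<bar> + ennreal \<alpha> * (ennreal L * (\<integral>\<^sup>+\<omega>. Uw \<omega> \<partial>M))
      + ennreal \<beta> * (\<integral>\<^sup>+\<omega>. (\<integral>\<^sup>+s. ennreal (Gt T s * \<bar>X s \<omega>\<bar>) \<partial>R) \<partial>M)
      + ennreal \<sigma> * (\<integral>\<^sup>+\<omega>. ennreal \<bar>Z T \<omega>\<bar> \<partial>M)"
      using Uwm m2 ZTm by (simp add: nn_integral_add nn_integral_cmult emeasure_space_1)
    also have "\<dots> \<le> ennreal \<bar>x0\<bar> + ennreal \<alpha> * (ennreal L * ennreal U)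
      + ennreal \<beta> * ennreal (L * C * T) + ennreal \<sigma> * ennreal Cz"
    proof -
      have "(\<integral>\<^sup>+\<omega>. Uw \<omega> \<partial>M) \<le> ennreal U" using uU by (simp add: Uw_def R_def)
      moreover have "(\<integral>\<^sup>+\<omega>. ennreal \<bar>Z T \<omega>\<bar> \<partial>M) \<le> ennreal Cz" using Zb TT by auto
      ultimately show ?thesis using XGint by (intro add_mono mult_left_mono order_refl) auto
    qed
    also have "\<dots> = ennreal (A + \<beta> * (L * C * T))"
      using ab L0 U0 Cz C0 T by (simp add: A_def ennreal_mult ennreal_plus mult.assoc add_ac)
    finally show ?thesis .
  qed
  have intXT: "integrable M (\<lambda>\<omega>. X T \<omega>)"
    using XTm XTb by (intro integrableI_bounded) (auto simp: top.not_eq_extremum intro: le_less_trans)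
  have "ennreal (\<integral>\<omega>. \<bar>X T \<omega>\<bar> \<partial>M) = (\<integral>\<^sup>+\<omega>. ennreal \<bar>X T \<omega>\<bar> \<partial>M)"
    using intXT by (intro nn_integral_eq_integral[symmetric]) auto
  also note XTb
  finally have "(\<integral>\<omega>. \<bar>X T \<omega>\<bar> \<partial>M) \<le> A + \<beta> * (L * C * T)"
    using A0 ab L0 C0 T by (subst (asm) ennreal_le_iff) auto
  moreover have "(\<integral>\<omega>. X T \<omega> \<partial>M) \<le> (\<integral>\<omega>. \<bar>X T \<omega>\<bar> \<partial>M)"
    using intXT by (intro integral_mono) auto
  moreover have "A + \<beta> * (L * C * T) = (1 + \<beta>*L*T*(2*exp((2*\<beta>*L+1)*T))) * (\<bar>x0\<bar> + \<sigma>*Cz + \<alpha>*L*U)"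
    by (simp add: A_def C_def algebra_simps)
  ultimately show ?thesis using intXT by simp
qed



definition Dc :: "real \<Rightarrow> real \<Rightarrow> real \<Rightarrow> real \<Rightarrow> real \<Rightarrow> real \<Rightarrow> real \<Rightarrow> real \<Rightarrow> real \<Rightarrow> real" where
  "Dc a1 a2 \<alpha> \<beta> \<sigma> x0 T L Cz =
    (let K3 = 1 + \<beta>*L*T*(2*exp((2*\<beta>*L+1)*T)); c = K3*\<alpha>*L*a2/a1 + 1
     in a2*K3*(\<bar>x0\<bar> + \<sigma>*Cz) + a2*K3*\<alpha>*L*(c*T/2))"

lemma perf_bound:
  fixes M :: "'a measure" and G :: "real \<Rightarrow> real" and X u Z :: "real \<Rightarrow> 'a \<Rightarrow> real"
  assumes P: "prob_space M" and T: "0 < T" and pos: "0 < \<alpha>" "0 < \<beta>" "0 < \<sigma>" "0 < a1" "0 < a2"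
    and Gc: "continuous_on {0..T} G" and GL: "\<forall>r\<in>{0..T}. \<bar>G r\<bar> \<le> L" and L0: "0 \<le> L"
    and Zm: "\<forall>t\<in>{0..T}. Z t \<in> borel_measurable M"
    and Zb: "\<forall>t\<in>{0..T}. (\<integral>\<^sup>+\<omega>. ennreal \<bar>Z t \<omega>\<bar> \<partial>M) \<le> ennreal Cz" and Cz: "0 \<le> Cz"
    and u: "u \<in> L2a M W T"
    and X: "volterra_solution M T G \<alpha> \<beta> \<sigma> x0 Z u X"
  shows "perf M T a1 a2 u X \<le> - (a1/2) * (L2norm M T u)^2 + Dc a1 a2 \<alpha> \<beta> \<sigma> x0 T L Cz"
proof -
  interpret prob_space M by (rule P)
  define R where "R = restrict_space lborel {0..T::real}"
  have spR: "space R = {0..T}" by (simp add: R_def)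
  interpret R: sigma_finite_measure R
    unfolding R_def by (rule sigma_finite_measure_restrict_space) (auto intro: sigma_finite_lborel)
  interpret MR: pair_sigma_finite M R by unfold_locales
  have OT: "OmegaT M T = M \<Otimes>\<^sub>M R" by (simp add: OmegaT_def R_def)
  have um: "(\<lambda>(\<omega>,s). u s \<omega>) \<in> borel_measurable (M \<Otimes>\<^sub>M R)"
    and u2: "integrable (M \<Otimes>\<^sub>M R) (\<lambda>(\<omega>,s). (u s \<omega>)^2)"
    using u unfolding L2a_def OT by auto
  define Q where "Q = integral\<^sup>L (M \<Otimes>\<^sub>M R) (\<lambda>(\<omega>,s). (u s \<omega>)^2)"
  have Q0: "0 \<le> Q" unfolding Q_def by (intro integral_nonneg_AE) auto
  have normQ: "(L2norm M T u)^2 = Q" using Q0 by (simp add: L2norm_def OT Q_def)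
  define K3 where "K3 = 1 + \<beta>*L*T*(2*exp((2*\<beta>*L+1)*T))"
  define c where "c = K3*\<alpha>*L*a2/a1 + 1"
  have K30: "0 \<le> K3" using pos L0 T by (simp add: K3_def)
  have c0: "0 < c"
  proof -
    have "0 \<le> K3*\<alpha>*L*a2/a1" using K30 pos L0 by simp
    then show ?thesis by (simp add: c_def)
  qed
  define U where "U = c * T / 2 + Q / (2 * c)"
  have U0: "0 \<le> U" using c0 T Q0 by (simp add: U_def)
  have measOT: "emeasure (M \<Otimes>\<^sub>M R) (space (M \<Otimes>\<^sub>M R)) = ennreal T"
  proof -
    have "emeasure (M \<Otimes>\<^sub>M R) (space M \<times> space R) = emeasure M (space M) * emeasure R (space R)"
      by (rule R.emeasure_pair_measure_Times) auto
    also have "\<dots> = ennreal T" using T by (simp add: emeasure_space_1 R_def emeasure_restrict_space)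
    finally show ?thesis by (simp add: space_pair_measure)
  qed
  have uU: "(\<integral>\<^sup>+\<omega>. (\<integral>\<^sup>+s. ennreal \<bar>u s \<omega>\<bar> \<partial>(restrict_space lborel {0..T})) \<partial>M) \<le> ennreal U"
  proof -
    have m: "(\<lambda>x. ennreal \<bar>u (snd x) (fst x)\<bar>) \<in> borel_measurable (M \<Otimes>\<^sub>M R)"
      using um by (simp add: split_beta') measurable
    have "(\<integral>\<^sup>+\<omega>. (\<integral>\<^sup>+s. ennreal \<bar>u s \<omega>\<bar> \<partial>R) \<partial>M) = (\<integral>\<^sup>+x. ennreal \<bar>u (snd x) (fst x)\<bar> \<partial>(M \<Otimes>\<^sub>M R))"
      using R.nn_integral_fst[OF m] by simp
    also have "\<dots> \<le> (\<integral>\<^sup>+x. ennreal (c/2) + ennreal (1/(2*c)) * ennreal ((u (snd x) (fst x))^2) \<partial>(M \<Otimes>\<^sub>M R))"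
    proof (intro nn_integral_mono)
      fix x
      let ?a = "u (snd x) (fst x)"
      have "\<bar>?a\<bar> \<le> c/2 + ?a^2 / (2*c)"
      proof -
        have "0 \<le> (\<bar>?a\<bar> - c)^2" by simp
        then have "2 * c * \<bar>?a\<bar> \<le> c^2 + ?a^2" by (simp add: power2_eq_square algebra_simps)
        then show ?thesis using c0 by (simp add: field_simps power2_eq_square)
      qed
      then have "ennreal \<bar>?a\<bar> \<le> ennreal (c/2 + 1/(2*c) * ?a^2)" by (intro ennreal_leI) simp
      also have "\<dots> = ennreal (c/2) + ennreal (1/(2*c) * ?a^2)" using c0 by (intro ennreal_plus) auto
      also have "ennreal (1/(2*c) * ?a^2) = ennreal (1/(2*c)) * ennreal (?a^2)" using c0 by (intro ennreal_mult) auto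
      finally show "ennreal \<bar>?a\<bar> \<le> ennreal (c/2) + ennreal (1/(2*c)) * ennreal (?a^2)" .
    qed
    also have "\<dots> = ennreal (c/2) * ennreal T + ennreal (1/(2*c)) * (\<integral>\<^sup>+x. ennreal ((u (snd x) (fst x))^2) \<partial>(M \<Otimes>\<^sub>M R))"
      using um measOT by (simp add: split_beta' nn_integral_add nn_integral_cmult)
    also have "(\<integral>\<^sup>+x. ennreal ((u (snd x) (fst x))^2) \<partial>(M \<Otimes>\<^sub>M R)) = ennreal Q"
      unfolding Q_def using u2 by (subst nn_integral_eq_integral) (auto simp: split_beta')
    also have "ennreal (c/2) * ennreal T + ennreal (1/(2*c)) * ennreal Q = ennreal U"
    proof -
      have e1: "ennreal (c/2) * ennreal T = ennreal (c/2 * T)" using c0 T by (intro ennreal_mult[symmetric]) auto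
      have e2: "ennreal (1/(2*c)) * ennreal Q = ennreal (1/(2*c) * Q)" using c0 Q0 by (intro ennreal_mult[symmetric]) auto
      have e3: "ennreal (c/2 * T) + ennreal (1/(2*c) * Q) = ennreal (c/2 * T + 1/(2*c) * Q)"
        using c0 T Q0 by (intro ennreal_plus[symmetric]) auto
      show ?thesis unfolding e1 e2 e3 U_def by (simp add: field_simps)
    qed
    finally show ?thesis by (simp add: R_def)
  qed
  have um': "(\<lambda>(\<omega>,s). u s \<omega>) \<in> borel_measurable (OmegaT M T)" using um OT by simp
  have VB: "integrable M (\<lambda>\<omega>. X T \<omega>) \<and>
    (\<integral>\<omega>. X T \<omega> \<partial>M) \<le> (1 + \<beta>*L*T*(2*exp((2*\<beta>*L+1)*T))) * (\<bar>x0\<bar> + \<sigma>*Cz + \<alpha>*L*U)"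
    by (rule volterra_bound[OF P T _ _ _ pos(2) Gc GL L0 Zm Zb Cz um' uU U0 X]) (use pos in auto)
  have intS: "integrable M (\<lambda>\<omega>. set_lebesgue_integral lborel {0..T} (\<lambda>s. a1 * (u s \<omega>)^2))"
    and intSv: "(\<integral>\<omega>. set_lebesgue_integral lborel {0..T} (\<lambda>s. a1 * (u s \<omega>)^2) \<partial>M) = a1 * Q"
  proof -
    have eqS: "set_lebesgue_integral lborel {0..T} (\<lambda>s. a1 * (u s \<omega>)^2) = (\<integral>s. a1 * (u s \<omega>)^2 \<partial>R)" for \<omega>
      unfolding R_def set_lebesgue_integral_def by (subst integral_restrict_space) auto
    have i2: "integrable (M \<Otimes>\<^sub>M R) (\<lambda>x. a1 * (u (snd x) (fst x))^2)"
      using u2 by (simp add: split_beta')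
    show "integrable M (\<lambda>\<omega>. set_lebesgue_integral lborel {0..T} (\<lambda>s. a1 * (u s \<omega>)^2))"
      unfolding eqS using MR.integrable_fst'[OF i2] by simp
    have "(\<integral>\<omega>. (\<integral>s. a1 * (u s \<omega>)^2 \<partial>R) \<partial>M) = integral\<^sup>L (M \<Otimes>\<^sub>M R) (\<lambda>x. a1 * (u (snd x) (fst x))^2)"
      using MR.integral_fst'[OF i2] by simp
    also have "\<dots> = a1 * Q" unfolding Q_def by (simp add: split_beta')
    finally show "(\<integral>\<omega>. set_lebesgue_integral lborel {0..T} (\<lambda>s. a1 * (u s \<omega>)^2) \<partial>M) = a1 * Q"
      unfolding eqS .
  qed
  have "perf M T a1 a2 u X = - (a1 * Q) + a2 * (\<integral>\<omega>. X T \<omega> \<partial>M)"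
    unfolding perf_def using intS intSv VB by simp
  also have "\<dots> \<le> - (a1 * Q) + a2 * (K3 * (\<bar>x0\<bar> + \<sigma>*Cz + \<alpha>*L*U))"
    using VB pos by (simp add: K3_def)
  also have "\<dots> = - (a1 * Q) + a2*K3*(\<bar>x0\<bar> + \<sigma>*Cz) + a2*K3*\<alpha>*L*(c*T/2) + (a2*K3*\<alpha>*L/(2*c)) * Q"
    using c0 by (simp add: U_def field_simps)
  finally have fin0: "perf M T a1 a2 u X \<le> - (a1 * Q) + a2*K3*(\<bar>x0\<bar> + \<sigma>*Cz) + a2*K3*\<alpha>*L*(c*T/2) + (a2*K3*\<alpha>*L/(2*c)) * Q" .
  have "(a2*K3*\<alpha>*L/(2*c)) * Q \<le> (a1/2) * Q"
  proof (rule mult_right_mono[OF _ Q0])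
    have "a2*K3*\<alpha>*L \<le> a1 * c" using pos by (simp add: c_def field_simps)
    then show "a2*K3*\<alpha>*L/(2*c) \<le> a1/2" using c0 by (simp add: field_simps)
  qed
  then have fin: "perf M T a1 a2 u X \<le> - (a1 * Q) + a2*K3*(\<bar>x0\<bar> + \<sigma>*Cz) + a2*K3*\<alpha>*L*(c*T/2) + (a1/2) * Q"
    using fin0 by linarith
  have "Dc a1 a2 \<alpha> \<beta> \<sigma> x0 T L Cz = a2*K3*(\<bar>x0\<bar> + \<sigma>*Cz) + a2*K3*\<alpha>*L*(c*T/2)"
    by (simp add: Dc_def Let_def K3_def c_def)
  then show ?thesis using fin normQ by (simp add: algebra_simps)
qed


theorem proposition3p1:
  fixes M :: "'a measure" and W :: "real \<Rightarrow> 'a \<Rightarrow> real"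
    and T \<alpha> \<beta> \<sigma> a1 a2 x0 h :: real and K :: "real \<Rightarrow> real"
    and Z :: "real \<Rightarrow> 'a \<Rightarrow> real" and Zn :: "nat \<Rightarrow> real \<Rightarrow> 'a \<Rightarrow> real"
    and Xs :: "(real \<Rightarrow> 'a \<Rightarrow> real) \<Rightarrow> real \<Rightarrow> 'a \<Rightarrow> real"
    and Xns :: "nat \<Rightarrow> (real \<Rightarrow> 'a \<Rightarrow> real) \<Rightarrow> real \<Rightarrow> 'a \<Rightarrow> real"
  assumes BM: "std_brownian_motion M W"
    and T: "T > 0" and pos: "\<alpha> > 0" "\<beta> > 0" "\<sigma> > 0" "a1 > 0" "a2 > 0"
    and h: "0 < h" "h < 1" and K: "holder_on T h K"
    and Z: "\<forall>t\<in>{0..T}. is_wiener_integral M W t (\<lambda>s. K (t - s)) (Z t)"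
    and Zn: "\<forall>n\<ge>1. \<forall>t\<in>{0..T}. is_wiener_integral M W t (\<lambda>s. bernstein T K n (t - s)) (Zn n t)"
    and Xs: "\<forall>u\<in>L2a M W T. volterra_solution M T K \<alpha> \<beta> \<sigma> x0 Z u (Xs u)"
    and Xns: "\<forall>n\<ge>1. \<forall>u\<in>L2a M W T.
                volterra_solution M T (bernstein T K n) \<alpha> \<beta> \<sigma> x0 (Zn n) u (Xns n u)"
  shows "\<forall>B::real. \<exists>R. \<forall>u\<in>L2a M W T. L2norm M T u \<ge> R \<longrightarrow>
           (\<forall>n\<ge>1. perf M T a1 a2 u (Xns n u) \<le> B) \<and> perf M T a1 a2 u (Xs u) \<le> B"
proof -
  have P: "prob_space M" using BM unfolding std_brownian_motion_def by blast
  have Kc: "continuous_on {0..T} K" by (rule holder_cont[OF h(1) K])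
  have "compact (K ` {0..T})" by (rule compact_continuous_image[OF Kc compact_Icc])
  then have "bounded (K ` {0..T})" by (rule compact_imp_bounded)
  then obtain L0 where L0: "\<forall>x\<in>K ` {0..T}. norm x \<le> L0" unfolding bounded_iff by blast
  define L where "L = max L0 0"
  have Lnn: "0 \<le> L" by (simp add: L_def)
  have KL: "\<forall>r\<in>{0..T}. \<bar>K r\<bar> \<le> L" using L0 by (auto simp: L_def)
  define Cz where "Cz = 2 + L^2 * T"
  have Cz0: "0 \<le> Cz" using T by (simp add: Cz_def)
  have CzT: "ennreal (2 + L^2 * t) \<le> ennreal Cz" if "t \<in> {0..T}" for t
    using that by (intro ennreal_leI) (auto simp: Cz_def intro!: mult_left_mono)
  have ZK: "\<forall>t\<in>{0..T}. Z t \<in> borel_measurable M" "\<forall>t\<in>{0..T}. (\<integral>\<^sup>+\<omega>. ennreal \<bar>Z t \<omega>\<bar> \<partial>M) \<le> ennreal Cz"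
  proof (safe)
    fix t assume t: "t \<in> {0..T}"
    have fb: "\<forall>s\<in>{0..t}. \<bar>K (t - s)\<bar> \<le> L" using KL t by auto
    have "Z t \<in> borel_measurable M \<and> (\<integral>\<^sup>+\<omega>. ennreal \<bar>Z t \<omega>\<bar> \<partial>M) \<le> ennreal (2 + L^2 * t)"
      using wiener_L1[OF BM _ fb, of "Z t"] Z t by auto
    then show "Z t \<in> borel_measurable M" "(\<integral>\<^sup>+\<omega>. ennreal \<bar>Z t \<omega>\<bar> \<partial>M) \<le> ennreal Cz"
      using CzT[OF t] by (auto intro: order_trans)
  qed
  have ZnK: "\<forall>t\<in>{0..T}. Zn n t \<in> borel_measurable M" "\<forall>t\<in>{0..T}. (\<integral>\<^sup>+\<omega>. ennreal \<bar>Zn n t \<omega>\<bar> \<partial>M) \<le> ennreal Cz"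
    if n: "n \<ge> 1" for n
  proof (safe)
    fix t assume t: "t \<in> {0..T}"
    have fb: "\<forall>s\<in>{0..t}. \<bar>bernstein T K n (t - s)\<bar> \<le> L" using bern_bound[OF T n KL] t by auto
    have "Zn n t \<in> borel_measurable M \<and> (\<integral>\<^sup>+\<omega>. ennreal \<bar>Zn n t \<omega>\<bar> \<partial>M) \<le> ennreal (2 + L^2 * t)"
      using wiener_L1[OF BM _ fb, of "Zn n t"] Zn n t by auto
    then show "Zn n t \<in> borel_measurable M" "(\<integral>\<^sup>+\<omega>. ennreal \<bar>Zn n t \<omega>\<bar> \<partial>M) \<le> ennreal Cz"
      using CzT[OF t] by (auto intro: order_trans)
  qed
  define D where "D = Dc a1 a2 \<alpha> \<beta> \<sigma> x0 T L Cz"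
  have bK: "perf M T a1 a2 u (Xs u) \<le> - (a1/2) * (L2norm M T u)^2 + D" if u: "u \<in> L2a M W T" for u
    unfolding D_def
    by (rule perf_bound[OF P T pos Kc KL Lnn ZK Cz0 u]) (use Xs u in auto)
  have bKn: "perf M T a1 a2 u (Xns n u) \<le> - (a1/2) * (L2norm M T u)^2 + D"
    if u: "u \<in> L2a M W T" and n: "n \<ge> 1" for u n
    unfolding D_def
    by (rule perf_bound[OF P T pos bern_cont _ Lnn ZnK[OF n] Cz0 u]) (use Xns u n bern_bound[OF T n KL] in auto)
  show ?thesis
  proof
    fix B :: real
    define R where "R = sqrt (2 * \<bar>D - B\<bar> / a1)"
    have R0: "0 \<le> R" unfolding R_def using pos(4) by (intro real_sqrt_ge_zero divide_nonneg_nonneg) auto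
    have key: "- (a1/2) * (L2norm M T u)^2 + D \<le> B" if "L2norm M T u \<ge> R" for u
    proof -
      have "R^2 \<le> (L2norm M T u)^2" using that R0 by (intro power_mono) auto
      moreover have "R^2 = 2 * \<bar>D - B\<bar> / a1"
      proof -
        have "0 \<le> 2 * \<bar>D - B\<bar> / a1" using pos(4) by (intro divide_nonneg_nonneg) auto
        then show ?thesis by (simp add: R_def)
      qed
      ultimately have "2 * \<bar>D - B\<bar> / a1 \<le> (L2norm M T u)^2" by simp
      then have "2 * \<bar>D - B\<bar> \<le> a1 * (L2norm M T u)^2" using pos(4) by (simp add: field_simps)
      then have "\<bar>D - B\<bar> \<le> (a1/2) * (L2norm M T u)^2" by simp
      moreover have "D - B \<le> \<bar>D - B\<bar>" by simp
      ultimately have "D - B \<le> (a1/2) * (L2norm M T u)^2" by (rule order_trans[rotated])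
      then show ?thesis by simp
    qed
    show "\<exists>R. \<forall>u\<in>L2a M W T. L2norm M T u \<ge> R \<longrightarrow>
           (\<forall>n\<ge>1. perf M T a1 a2 u (Xns n u) \<le> B) \<and> perf M T a1 a2 u (Xs u) \<le> B"
    proof (intro exI[of _ R] ballI impI conjI allI)
      fix u assume u: "u \<in> L2a M W T" and uR: "R \<le> L2norm M T u"
      show "perf M T a1 a2 u (Xs u) \<le> B" using order_trans[OF bK[OF u] key[OF uR]] .
      fix n :: nat assume n: "1 \<le> n"
      show "perf M T a1 a2 u (Xns n u) \<le> B" using order_trans[OF bKn[OF u n] key[OF uR]] .
    qed
  qed
qed


end
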